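(* Assume $F$ is analytic on $\Omega$ and $$\gamma:=\sup_{n>1}\Big\|\frac{F'(x_* )^{-1}F^{(n)}(x_* )}{n!}\Big\|^{1/(n-1)}<+\infty .$$ Let $\kappa:=\sup\{t\in[0,1/\gamma): B(x_*,t)\subset\Omega\}$. Let $0\le\vartheta<1$, $0\le\omega_2<\omega_1$ with $\omega_1\vartheta+\omega_2<1$, $\lambda\in[0,(1-\omega_2-\omega_1\vartheta)/(\omega_1(1+\vartheta)))$, and set $a:=\omega_1(1+\vartheta)(1-3\lambda)+4(1-\omega_1\vartheta-\omega_2)$, $b:=1-\omega_1[(1+\vartheta)\lambda+\vartheta]-\omega_2$, $$\bar\sigma:=\min\Big\{\kappa,\frac{a-\sqrt{a^2-8b^2}}{4\gamma b}\Big\}.$$ Let $x_0\in C\cap B(x_*,\bar\sigma)\setminus\{x_*\}$, $\{\theta_k\}\subset[0,\lambda^2/2]$, and let $\{M_k\}$, $\{(s_k,r_k,y_k)\}$, $\{x_k\}$ be generated by the INL-CondG method (assume it does not stop). Assume for all $k\ge0$: $\|M_k^{-1}F'(x_k)\|\le\omega_1$, $\|M_k^{-1}F'(x_k)-I\|\le\omega_2$, and there are invertible $P_k$ and scalars $\eta_k$ with $\|P_kr_k\|\le\eta_k\|P_kF(x_k)\|$ and $0\le\eta_k\,\mathrm{cond}(P_kF'(x_k))\le\vartheta$. Then $\{x_k\}\subset B(x_*,\bar\sigma)\cap C$, $x_k\to x_*$, $$\|x_{k+1}-x_*\|<\|x_k-x_*\|,\qquad \limsup_{k\to\infty}\frac{\|x_{k+1}-x_*\|}{\|x_k-x_*\|}\le\omega_1[(1+\vartheta)\sqrt{2\tilde\theta}+\vartheta]+\omega_2,$$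 with $\tilde\theta=\limsup_k\theta_k$, and for all $k\ge0$ $$\|x_{k+1}-x_*\|\le\frac{\omega_1(1+\vartheta)(1+\lambda)\gamma}{2(1-\gamma\|x_0-x_*\|)^2-1}\|x_k-x_*\|^2+\big(\omega_1[(1+\vartheta)\lambda+\vartheta]+\omega_2\big)\|x_k-x_*\|.$$
   Context: Setting: $\Omega\subset\mathbb{R}^n$ is open, $F:\Omega\to\mathbb{R}^n$ is continuously differentiable with Jacobian $F'(x)$ and $n$-th derivative $F^{(n)}$, $C\subset\Omega$ is a nonempty convex compact set, and $x_*\in C$ satisfies $F(x_* )=0$ with $F'(x_* )$ nonsingular. $\|\cdot\|$ is the Euclidean norm on $\mathbb{R}^n$ and the induced operator (multilinear) norm; $B(a,\delta)$ is the open ball of center $a$ and radius $\delta$; $\mathrm{cond}(A)=\|A^{-1}\|\|A\|$. CondG procedure $z=\mathrm{CondG}(y,x,\varepsilon)$ (for $y\in\mathbb{R}^n$, $x\in C$, $\varepsilon\ge0$): set $z_1=x$, $t=1$. (P1) Compute an optimal solution $u_t$ of $g_t^*=\min_{u\in C}\langle z_t-y,u-z_t\rangle$. (P2) If $g_t^*\ge-\varepsilon$, set $z=z_t$ and stop; otherwise set $\alpha_t=\min\{1,-g_t^*/\|u_t-z_t\|^2\}$, $z_{t+1}=z_t+\alpha_t(u_t-z_t)$, $t\leftarrow t+1$ and go to (P1). INL-CondG method: given $x_0\in C$ and $\{\theta_j\}\subset[0,\infty)$, for $k=0,1,\dots$: if $F(x_k)=0$ stop; otherwise choose an invertible matrix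 $M_k$ (approximating $F'(x_k)$) and compute $(s_k,r_k,y_k)$ with $M_ks_k=-F(x_k)+r_k$, $y_k=x_k+s_k$; then set $x_{k+1}=\mathrm{CondG}(y_k,x_k,\theta_k\|s_k\|^2)$. *)

theory Defs
  imports "HOL-Analysis.Analysis"
begin

definition jac :: "(real^'n \<Rightarrow> real^'n) \<Rightarrow> real^'n \<Rightarrow> real^'n^'n" where
  "jac F x = matrix (frechet_derivative F (at x))"

definition opnorm :: "real^'n^'m \<Rightarrow> real" where
  "opnorm A = onorm (\<lambda>v. A *v v)"

definition cond :: "real^'n^'n \<Rightarrow> real" where
  "cond A = opnorm (matrix_inv A) * opnorm A"

(* k-th Frechet derivative as a k-linear map applied to the list of directions
   [h1,...,hk]:  F^(k+1)(x)[h1,...,hk+1] = D(y \<mapsto> F^(k)(y)[h2,...,hk+1])(x) h1 *)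
fun hderiv :: "nat \<Rightarrow> ('a::real_normed_vector \<Rightarrow> 'b::real_normed_vector) \<Rightarrow> 'a \<Rightarrow> 'a list \<Rightarrow> 'b" where
  "hderiv 0 F x hs = F x"
| "hderiv (Suc k) F x hs = frechet_derivative (\<lambda>y. hderiv k F y (tl hs)) (at x) (hd hs)"

definition real_analytic_on :: "('a::real_normed_vector \<Rightarrow> 'b::real_normed_vector) \<Rightarrow> 'a set \<Rightarrow> bool" where
  "real_analytic_on F \<Omega> \<longleftrightarrow>
     (\<forall>k hs. \<forall>x\<in>\<Omega>. (\<lambda>y. hderiv k F y hs) differentiable (at x)) \<and>
     (\<forall>x\<in>\<Omega>. \<exists>r>0. \<forall>y\<in>ball x r.
        (\<lambda>k. hderiv k F x (replicate k (y - x)) /\<^sub>R fact k) sums F y)"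

definition mlnorm :: "real^'n^'n \<Rightarrow> nat \<Rightarrow> (real^'n \<Rightarrow> real^'n) \<Rightarrow> real^'n \<Rightarrow> real" where
  "mlnorm A n F x = Sup {norm (A *v (hderiv n F x hs /\<^sub>R fact n)) | hs.
                          length hs = n \<and> (\<forall>h\<in>set hs. norm h \<le> 1)}"

definition gmin :: "'a::real_inner set \<Rightarrow> 'a \<Rightarrow> 'a \<Rightarrow> real" where
  "gmin C y z = Inf {inner (z - y) (u - z) | u. u \<in> C}"

(* condg C y \<epsilon> z w : the CondG procedure started at z_t = z (with target y and
   tolerance \<epsilon>) can terminate with output w. *)
inductive condg_run :: "'a::real_inner set \<Rightarrow> 'a \<Rightarrow> real \<Rightarrow> 'a \<Rightarrow> 'a \<Rightarrow> bool"
  for C y \<epsilon> where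
  stop: "gmin C y z \<ge> - \<epsilon> \<Longrightarrow> condg_run C y \<epsilon> z z"
| step: "u \<in> C \<Longrightarrow> inner (z - y) (u - z) = gmin C y z \<Longrightarrow> gmin C y z < - \<epsilon> \<Longrightarrow>
         \<alpha> = min 1 (- gmin C y z / (norm (u - z))\<^sup>2) \<Longrightarrow>
         condg_run C y \<epsilon> (z + \<alpha> *\<^sub>R (u - z)) w \<Longrightarrow> condg_run C y \<epsilon> z w"

definition CondG_out :: "'a::real_inner set \<Rightarrow> 'a \<Rightarrow> 'a \<Rightarrow> real \<Rightarrow> 'a \<Rightarrow> bool" where
  "CondG_out C y x \<epsilon> z \<longleftrightarrow> condg_run C y \<epsilon> x z"

end

theory Submission
  imports Defs "HOL-Complex_Analysis.Complex_Analysis"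
begin

lemma matrix_inv_props:
  fixes A :: "real^'n^'n"
  assumes "invertible A"
  shows "A ** matrix_inv A = mat 1" "matrix_inv A ** A = mat 1"
proof -
  have "\<exists>A'. A ** A' = mat 1 \<and> A' ** A = mat 1" using assms unfolding invertible_def by blast
  then have "A ** matrix_inv A = mat 1 \<and> matrix_inv A ** A = mat 1"
    unfolding matrix_inv_def by (rule someI_ex)
  then show "A ** matrix_inv A = mat 1" "matrix_inv A ** A = mat 1" by auto
qed

lemma matrix_inv_mv:
  fixes A :: "real^'n^'n"
  assumes "invertible A"
  shows "A *v (matrix_inv A *v v) = v" "matrix_inv A *v (A *v v) = v"
  using matrix_inv_props[OF assms] by (simp_all add: matrix_vector_mul_assoc)

lemma opnorm_bound:
  fixes A :: "real^'n^'m"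
  shows "norm (A *v v) \<le> opnorm A * norm v"
  unfolding opnorm_def
  by (rule onorm) simp

lemma opnorm_nonneg: "0 \<le> opnorm (A::real^'n^'m)"
  unfolding opnorm_def by (rule onorm_pos_le) simp

lemma invertible_of_inj:
  fixes A :: "real^'n^'n"
  assumes "\<And>x. A *v x = 0 \<Longrightarrow> x = 0"
  shows "invertible A"
  using assms matrix_left_invertible_ker invertible_left_inverse by blast

definition mlin :: "nat \<Rightarrow> ('a::real_vector list \<Rightarrow> 'b::real_vector) \<Rightarrow> bool" where
  "mlin k M \<longleftrightarrow> (\<forall>hs i. length hs = k \<longrightarrow> i < k \<longrightarrow> linear (\<lambda>h. M (hs[i:=h])))"

lemma mlin_Cons: "mlin (Suc k) M \<Longrightarrow> mlin k (\<lambda>t. M (a # t))"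
  unfolding mlin_def
proof (intro allI impI)
  fix hs :: "'a list" and i assume A: "\<forall>hs i. length hs = Suc k \<longrightarrow> i < Suc k \<longrightarrow> linear (\<lambda>h. M (hs[i := h]))"
    "length hs = k" "i < k"
  then have "linear (\<lambda>h. M ((a#hs)[Suc i := h]))" by (metis length_Cons Suc_less_eq)
  then show "linear (\<lambda>h. M (a # hs[i := h]))" by simp
qed

lemma mlin_first: "mlin (Suc k) M \<Longrightarrow> length hs = k \<Longrightarrow> linear (\<lambda>h. M (h # hs))"
  unfolding mlin_def
proof -
  assume A: "\<forall>hs i. length hs = Suc k \<longrightarrow> i < Suc k \<longrightarrow> linear (\<lambda>h. M (hs[i := h]))" "length hs = k"
  then have "linear (\<lambda>h. M ((0#hs)[0 := h]))" by (metis length_Cons zero_less_Suc)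
  then show ?thesis by simp
qed

lemma mlin_scale:
  "mlin k M \<Longrightarrow> length hs = k \<Longrightarrow> length cs = k \<Longrightarrow>
    M (map2 (\<lambda>c h. c *\<^sub>R h) cs hs) = prod_list cs *\<^sub>R M hs"
proof (induction k arbitrary: M hs cs)
  case 0 then show ?case by simp
next
  case (Suc k)
  obtain h hs' where hs: "hs = h # hs'" using Suc.prems by (cases hs) auto
  obtain c cs' where cs: "cs = c # cs'" using Suc.prems by (cases cs) auto
  have L: "linear (\<lambda>g. M (g # map2 (\<lambda>c h. c *\<^sub>R h) cs' hs'))"
    using Suc.prems hs cs by (intro mlin_first) auto
  have "M (map2 (\<lambda>c h. c *\<^sub>R h) cs hs) = c *\<^sub>R M (h # map2 (\<lambda>c h. c *\<^sub>R h) cs' hs')"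
    using linear_scale[OF L] by (simp add: hs cs)
  also have "M (h # map2 (\<lambda>c h. c *\<^sub>R h) cs' hs') = prod_list cs' *\<^sub>R M (h # hs')"
    using Suc.IH[OF mlin_Cons[OF Suc.prems(1)], of hs' cs'] Suc.prems hs cs by simp
  finally show ?case by (simp add: hs cs)
qed

lemma mlin_replicate_scale:
  "mlin k M \<Longrightarrow> M (replicate k (c *\<^sub>R v)) = c ^ k *\<^sub>R M (replicate k v)"
  using mlin_scale[of k M "replicate k v" "replicate k c"]
  by (simp add: prod_list_replicate zip_replicate)

lemma mlin_zero:
  "mlin k M \<Longrightarrow> length hs = k \<Longrightarrow> i < k \<Longrightarrow> hs ! i = 0 \<Longrightarrow> M hs = 0"
proof -
  assume A: "mlin k M" "length hs = k" "i < k" "hs ! i = 0"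
  then have "linear (\<lambda>h. M (hs[i:=h]))" unfolding mlin_def by blast
  then have "M (hs[i:=0]) = 0" using linear_0 by fastforce
  moreover have "hs[i:=0] = hs" using A by (metis list_update_id)
  ultimately show ?thesis by simp
qed

lemma linear_cart_expand:
  fixes f :: "real^'n \<Rightarrow> 'b::real_vector"
  assumes "linear f"
  shows "f h = (\<Sum>j\<in>UNIV. (h $ j) *\<^sub>R f (axis j 1))"
proof -
  have "h = (\<Sum>j\<in>UNIV. (h $ j) *\<^sub>R axis j 1)"
    using basis_expansion[of h] by (simp add: scalar_mult_eq_scaleR)
  then have "f h = f (\<Sum>j\<in>UNIV. (h $ j) *\<^sub>R axis j 1)" by simp
  also have "\<dots> = (\<Sum>j\<in>UNIV. (h $ j) *\<^sub>R f (axis j 1))"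
    using assms by (simp add: linear_sum linear_scale)
  finally show ?thesis .
qed

lemma mlin_bounded:
  fixes M :: "(real^'n) list \<Rightarrow> 'b::real_normed_vector"
  shows "mlin k M \<Longrightarrow> \<exists>B\<ge>0. \<forall>hs. length hs = k \<longrightarrow> norm (M hs) \<le> B * prod_list (map norm hs)"
proof (induction k arbitrary: M)
  case 0
  show ?case by (rule exI[of _ "norm (M [])"]) auto
next
  case (Suc k)
  have "\<forall>j. \<exists>B\<ge>0. \<forall>hs. length hs = k \<longrightarrow> norm (M (axis j 1 # hs)) \<le> B * prod_list (map norm hs)"
    using Suc.IH[OF mlin_Cons[OF Suc.prems]] by blast
  then obtain B where B: "\<And>j. B j \<ge> 0" "\<And>j hs. length hs = k \<Longrightarrow> norm (M (axis j 1 # hs)) \<le> B j * prod_list (map norm hs)"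
    by metis
  show ?case
  proof (intro exI[of _ "\<Sum>j\<in>UNIV. B j"] conjI allI impI)
    show "0 \<le> (\<Sum>j\<in>UNIV. B j)" using B(1) by (simp add: sum_nonneg)
    fix hs :: "(real^'n) list" assume "length hs = Suc k"
    then obtain h hs' where hs: "hs = h # hs'" "length hs' = k" by (cases hs) auto
    have L: "linear (\<lambda>g. M (g # hs'))" using Suc.prems hs by (intro mlin_first) auto
    have "norm (M hs) = norm (\<Sum>j\<in>UNIV. (h $ j) *\<^sub>R M (axis j 1 # hs'))"
      using linear_cart_expand[OF L, of h] hs by simp
    also have "\<dots> \<le> (\<Sum>j\<in>UNIV. norm ((h $ j) *\<^sub>R M (axis j 1 # hs')))" by (rule norm_sum)
    also have "\<dots> \<le> (\<Sum>j\<in>UNIV. norm h * (B j * prod_list (map norm hs')))"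
    proof (rule sum_mono)
      fix j
      have "norm ((h $ j) *\<^sub>R M (axis j 1 # hs')) = \<bar>h $ j\<bar> * norm (M (axis j 1 # hs'))" by simp
      also have "\<dots> \<le> norm h * (B j * prod_list (map norm hs'))"
        by (rule mult_mono) (auto simp: component_le_norm_cart B hs)
      finally show "norm ((h $ j) *\<^sub>R M (axis j 1 # hs')) \<le> norm h * (B j * prod_list (map norm hs'))" .
    qed
    also have "\<dots> = (\<Sum>j\<in>UNIV. B j * (norm h * prod_list (map norm hs')))"
      by (rule sum.cong) (simp_all add: algebra_simps)
    also have "\<dots> = (\<Sum>j\<in>UNIV. B j) * (norm h * prod_list (map norm hs'))"
      by (rule sum_distrib_right[symmetric])
    also have "\<dots> = (\<Sum>j\<in>UNIV. B j) * prod_list (map norm hs)"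
      by (simp add: hs)
    finally show "norm (M hs) \<le> (\<Sum>j\<in>UNIV. B j) * prod_list (map norm hs)" .
  qed
qed

lemma prod_list_le_1': "(\<forall>x\<in>set xs. 0 \<le> x \<and> x \<le> (1::real)) \<Longrightarrow> 0 \<le> prod_list xs \<and> prod_list xs \<le> 1"
  by (induction xs) (auto intro: mult_le_one)

lemma prod_list_le_1: "(\<forall>x\<in>set xs. 0 \<le> x \<and> x \<le> (1::real)) \<Longrightarrow> prod_list xs \<le> 1"
  using prod_list_le_1' by blast

lemma prod_list_nonneg': "(\<forall>x\<in>set xs. 0 \<le> x) \<Longrightarrow> 0 \<le> prod_list (xs::real list)"
  by (induction xs) auto

definition mlsup :: "nat \<Rightarrow> ((real^'n) list \<Rightarrow> 'b::real_normed_vector) \<Rightarrow> real" where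
  "mlsup k M = Sup {norm (M hs) | hs. length hs = k \<and> (\<forall>h\<in>set hs. norm h \<le> 1)}"

lemma mlsup_bdd:
  fixes M :: "(real^'n) list \<Rightarrow> 'b::real_normed_vector"
  assumes "mlin k M"
  shows "bdd_above {norm (M hs) | hs. length hs = k \<and> (\<forall>h\<in>set hs. norm h \<le> 1)}"
proof -
  obtain B where B: "B \<ge> 0" "\<And>hs. length hs = k \<Longrightarrow> norm (M hs) \<le> B * prod_list (map norm hs)"
    using mlin_bounded[OF assms] by blast
  show ?thesis
  proof (rule bdd_aboveI[of _ B])
    fix x assume "x \<in> {norm (M hs) | hs. length hs = k \<and> (\<forall>h\<in>set hs. norm h \<le> 1)}"
    then obtain hs where hs: "x = norm (M hs)" "length hs = k" "\<forall>h\<in>set hs. norm h \<le> 1" by blast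
    then have p1: "prod_list (map norm hs) \<le> 1" by (intro prod_list_le_1) auto
    have "B * prod_list (map norm hs) \<le> B" using p1 B(1) by (simp add: mult_left_le)
    with B(2)[OF hs(2)] hs(1) show "x \<le> B" by linarith
  qed
qed

lemma mlsup_nonneg:
  fixes M :: "(real^'n) list \<Rightarrow> 'b::real_normed_vector"
  assumes "mlin k M"
  shows "0 \<le> mlsup k M"
proof -
  have "norm (M (replicate k 0)) \<le> mlsup k M"
    unfolding mlsup_def by (rule cSup_upper[OF _ mlsup_bdd[OF assms]]) auto
  then show ?thesis by (meson norm_ge_zero order_trans)
qed

lemma mlsup_bound:
  fixes M :: "(real^'n) list \<Rightarrow> 'b::real_normed_vector"
  assumes "mlin k M" "length hs = k"
  shows "norm (M hs) \<le> mlsup k M * prod_list (map norm hs)"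
proof (cases "\<exists>i<k. hs ! i = 0")
  case True
  then obtain i where "i < k" "hs ! i = 0" by blast
  then have "M hs = 0" using mlin_zero[OF assms] by blast
  then show ?thesis using mlsup_nonneg[OF assms(1)]
    by (simp add: prod_list_nonneg')
next
  case False
  define us where "us = map (\<lambda>h. (1 / norm h) *\<^sub>R h) hs"
  have nz: "\<forall>h\<in>set hs. h \<noteq> 0" using False assms(2) by (metis in_set_conv_nth)
  have hs_eq: "map2 (\<lambda>c h. c *\<^sub>R h) (map norm hs) us = hs"
    unfolding us_def using nz by (induction hs) auto
  have "M hs = prod_list (map norm hs) *\<^sub>R M us"
    using mlin_scale[OF assms(1), of us "map norm hs"] hs_eq assms(2) by (simp add: us_def)
  moreover have "norm (M us) \<le> mlsup k M"
    unfolding mlsup_def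
    by (rule cSup_upper[OF _ mlsup_bdd[OF assms(1)]], rule CollectI, rule exI[of _ us]) (use assms(2) nz in \<open>auto simp: us_def\<close>)
  moreover have "0 \<le> prod_list (map norm hs)" by (simp add: prod_list_nonneg')
  ultimately have "norm (M hs) = prod_list (map norm hs) * norm (M us)" by simp
  also have "\<dots> \<le> prod_list (map norm hs) * mlsup k M"
    using \<open>norm (M us) \<le> mlsup k M\<close> by (simp add: mult_left_mono prod_list_nonneg')
  finally show ?thesis by (simp add: mult.commute)
qed

lemma mlin_comp: "mlin k M \<Longrightarrow> linear f \<Longrightarrow> mlin k (\<lambda>hs. f (M hs))"
  unfolding mlin_def using linear_compose[unfolded o_def] by blast

lemma mlin_diff_bound:
  fixes M :: "(real^'n) list \<Rightarrow> 'b::real_normed_vector"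
  assumes "mlin k M" "K \<ge> 0" "\<And>hs. length hs = k \<Longrightarrow> norm (M hs) \<le> K * prod_list (map norm hs)"
  shows "norm (M (replicate k a) - M (replicate k b)) \<le> K * ((norm b + norm (a - b)) ^ k - norm b ^ k)"
  using assms
proof (induction k arbitrary: M K)
  case 0 then show ?case by simp
next
  case (Suc k)
  define Mb where "Mb = (\<lambda>t. M (b # t))"
  have mlb: "mlin k Mb" unfolding Mb_def by (rule mlin_Cons[OF Suc.prems(1)])
  have Kb: "\<And>hs. length hs = k \<Longrightarrow> norm (Mb hs) \<le> (K * norm b) * prod_list (map norm hs)"
    using Suc.prems(3)[of "b # hs" for hs] unfolding Mb_def by (simp add: mult_ac)
  have IH: "norm (Mb (replicate k a) - Mb (replicate k b)) \<le> (K * norm b) * ((norm b + norm (a - b)) ^ k - norm b ^ k)"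
    by (rule Suc.IH[OF mlb _ Kb]) (use Suc.prems in auto)
  have L: "linear (\<lambda>g. M (g # replicate k a))" by (rule mlin_first[OF Suc.prems(1)]) simp
  have split: "M (replicate (Suc k) a) - M (replicate (Suc k) b)
      = M ((a - b) # replicate k a) + (Mb (replicate k a) - Mb (replicate k b))"
    using linear_diff[OF L, of a b] by (simp add: Mb_def)
  have na: "norm a \<le> norm b + norm (a - b)" by (metis add.commute diff_add_cancel norm_triangle_ineq)
  have "norm (M ((a - b) # replicate k a)) \<le> K * (norm (a - b) * norm a ^ k)"
    using Suc.prems(3)[of "(a - b) # replicate k a"] by (simp add: prod_list_replicate)
  also have "\<dots> \<le> K * (norm (a - b) * (norm b + norm (a - b)) ^ k)"
    using Suc.prems(2) by (intro mult_left_mono power_mono na) auto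
  finally have A1: "norm (M ((a - b) # replicate k a)) \<le> K * (norm (a - b) * (norm b + norm (a - b)) ^ k)" .
  have "norm (M (replicate (Suc k) a) - M (replicate (Suc k) b))
      \<le> norm (M ((a - b) # replicate k a)) + norm (Mb (replicate k a) - Mb (replicate k b))"
    unfolding split by (rule norm_triangle_ineq)
  also have "\<dots> \<le> K * (norm (a - b) * (norm b + norm (a - b)) ^ k) + (K * norm b) * ((norm b + norm (a - b)) ^ k - norm b ^ k)"
    using A1 IH by linarith
  also have "\<dots> = K * ((norm b + norm (a - b)) ^ Suc k - norm b ^ Suc k)"
    by (simp add: algebra_simps)
  finally show ?case .
qed

definition HDiff :: "((real^'n) \<Rightarrow> (real^'n)) \<Rightarrow> (real^'n) set \<Rightarrow> bool" where
  "HDiff F \<Omega> \<longleftrightarrow> (\<forall>k hs. \<forall>x\<in>\<Omega>. (\<lambda>y. hderiv k F y hs) differentiable (at x))"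

lemma hderiv_mlin:
  assumes "open \<Omega>" "HDiff F \<Omega>"
  shows "x \<in> \<Omega> \<Longrightarrow> mlin k (hderiv k F x)"
proof (induction k arbitrary: x)
  case 0 then show ?case by (simp add: mlin_def)
next
  case (Suc k)
  have dif: "\<And>hs y. y \<in> \<Omega> \<Longrightarrow> (\<lambda>y. hderiv k F y hs) differentiable (at y)"
    using assms(2) unfolding HDiff_def by blast
  show ?case unfolding mlin_def
  proof (intro allI impI)
    fix hs :: "(real^'a) list" and i assume hs: "length hs = Suc k" "i < Suc k"
    then obtain a hs' where hs': "hs = a # hs'" "length hs' = k" by (cases hs) auto
    show "linear (\<lambda>h. hderiv (Suc k) F x (hs[i := h]))"
    proof (cases i)
      case 0
      then show ?thesis using hs' linear_frechet_derivative[OF dif[OF Suc.prems]] by simp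
    next
      case (Suc j)
      then have j: "j < k" using hs hs' by simp
      define G where "G = (\<lambda>h y. hderiv k F y (hs'[j:=h]))"
      define D where "D = (\<lambda>h. frechet_derivative (G h) (at x))"
      have GD: "\<And>h. (G h has_derivative D h) (at x)"
        unfolding D_def G_def using dif[OF Suc.prems] frechet_derivative_works by blast
      have lin: "\<And>y. y \<in> \<Omega> \<Longrightarrow> linear (\<lambda>h. G h y)"
        using Suc.IH hs' j unfolding G_def mlin_def by blast
      have eq: "(\<lambda>h. hderiv (Suc k) F x (hs[i := h])) = (\<lambda>h. D h a)"
        using Suc hs' by (simp add: D_def G_def)
      have Dadd: "D (h1 + h2) = (\<lambda>v. D h1 v + D h2 v)" for h1 h2
      proof -
        have "((\<lambda>y. G h1 y + G h2 y) has_derivative (\<lambda>v. D h1 v + D h2 v)) (at x)"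
          by (intro has_derivative_add GD)
        then have "(G (h1 + h2) has_derivative (\<lambda>v. D h1 v + D h2 v)) (at x)"
          by (rule has_derivative_transform_within_open[OF _ assms(1) Suc.prems])
             (simp add: linear_add[OF lin])
        then show ?thesis unfolding D_def by (rule frechet_derivative_at[symmetric])
      qed
      have Dscale: "D (c *\<^sub>R h) = (\<lambda>v. c *\<^sub>R D h v)" for c h
      proof -
        have "((\<lambda>y. c *\<^sub>R G h y) has_derivative (\<lambda>v. c *\<^sub>R D h v)) (at x)"
          by (intro has_derivative_scaleR_right GD)
        then have "(G (c *\<^sub>R h) has_derivative (\<lambda>v. c *\<^sub>R D h v)) (at x)"
          by (rule has_derivative_transform_within_open[OF _ assms(1) Suc.prems])
             (simp add: linear_scale[OF lin])
        then show ?thesis unfolding D_def by (rule frechet_derivative_at[symmetric])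
      qed
      show ?thesis unfolding eq
        by (rule linearI) (simp_all add: Dadd Dscale)
    qed
  qed
qed

lemma hderiv_line:
  assumes "open \<Omega>" "HDiff F \<Omega>" "p + t *\<^sub>R v \<in> \<Omega>"
  shows "((\<lambda>t. hderiv k F (p + t *\<^sub>R v) hs) has_vector_derivative hderiv (Suc k) F (p + t *\<^sub>R v) (v # hs)) (at t)"
proof -
  define G where "G = (\<lambda>y. hderiv k F y hs)"
  define q where "q = p + t *\<^sub>R v"
  have "G differentiable (at q)" using assms unfolding HDiff_def G_def q_def by blast
  then have GD: "(G has_derivative frechet_derivative G (at q)) (at q)"
    by (rule frechet_derivative_works[THEN iffD1])
  have lin: "linear (frechet_derivative G (at q))"
    by (rule linear_frechet_derivative) fact
  have L: "((\<lambda>t. p + t *\<^sub>R v) has_derivative (\<lambda>s. s *\<^sub>R v)) (at t)"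
    by (auto intro!: derivative_eq_intros)
  have "((\<lambda>t. G (p + t *\<^sub>R v)) has_derivative (\<lambda>s. frechet_derivative G (at q) (s *\<^sub>R v))) (at t)"
    using has_derivative_compose[OF L, of G] GD unfolding q_def by (simp add: o_def)
  then show ?thesis
    unfolding has_vector_derivative_def G_def q_def
    by (simp add: linear_scale[OF lin[unfolded G_def q_def]])
qed

lemma Re_aux: "Re (z * complex_of_real x / fact n) = Re z * x / fact n"
proof -
  have "z * complex_of_real x / fact n = z * complex_of_real x / complex_of_real (fact n)"
    by (simp add: of_real_fact)
  also have "Re \<dots> = Re (z * complex_of_real x) / fact n" by (rule Re_divide_of_real)
  also have "Re (z * complex_of_real x) = Re z * x" by (cases z) (simp add: complex_of_real_def)
  finally show ?thesis .
qed

lemma analytic_1d: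
  fixes fd :: "nat \<Rightarrow> real \<Rightarrow> real" and a :: "nat \<Rightarrow> real" and U :: "real set" and \<rho> :: real
  assumes U: "open U" "{0..1} \<subseteq> U"
    and der: "\<And>k t. t \<in> U \<Longrightarrow> (fd k has_real_derivative fd (Suc k) t) (at t)"
    and loc: "\<And>t. t \<in> {0..1} \<Longrightarrow> \<exists>r>0. \<forall>s. \<bar>s - t\<bar> < r \<longrightarrow> (\<lambda>k. fd k t / fact k * (s - t) ^ k) sums fd 0 s"
    and coef: "\<And>k. a k = fd k 0 / fact k"
    and rho: "\<rho> > 1" "summable (\<lambda>k. \<bar>a k\<bar> * \<rho> ^ k)"
    and t: "t \<in> {0..1}"
  shows "(\<lambda>k. a k * t ^ k) sums fd 0 t"
proof -
  define Pf where "Pf = Abs_fps (\<lambda>k. complex_of_real (a k))"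
  define P where "P = eval_fps Pf"
  define B where "B = ball (0::complex) \<rho>"
  have "summable (\<lambda>n. fps_nth Pf n * complex_of_real \<rho> ^ n)"
  proof (rule summable_norm_cancel)
    show "summable (\<lambda>n. norm (fps_nth Pf n * complex_of_real \<rho> ^ n))"
      using rho by (simp add: Pf_def norm_mult norm_power)
  qed
  then have rad: "ereal \<rho> \<le> fps_conv_radius Pf"
    using conv_radius_geI[of "fps_nth Pf" "complex_of_real \<rho>"] rho
    by (simp add: fps_conv_radius_def)
  have radlt: "\<And>x::real. \<bar>x\<bar> < \<rho> \<Longrightarrow> norm (complex_of_real x) < fps_conv_radius Pf"
  proof -
    fix x :: real assume "\<bar>x\<bar> < \<rho>"
    then have "ereal (norm (complex_of_real x)) < ereal \<rho>" by simp
    then show "norm (complex_of_real x) < fps_conv_radius Pf" using rad by (rule less_le_trans)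
  qed
  have BB: "B \<subseteq> eball 0 (fps_conv_radius Pf)"
  proof
    fix x assume "x \<in> B"
    then have "ereal (norm x) < ereal \<rho>" by (simp add: B_def)
    then have "ereal (norm x) < fps_conv_radius Pf" using rad by (rule less_le_trans)
    then show "x \<in> eball 0 (fps_conv_radius Pf)" by (simp add: eball_def)
  qed
  have holP: "P holomorphic_on B" unfolding P_def by (rule holomorphic_on_eval_fps[OF BB])
  have openB: "open B" by (simp add: B_def)
  define D where "D = (\<lambda>k. (deriv ^^ k) P)"
  have holD: "\<And>k. D k holomorphic_on B" unfolding D_def by (rule holomorphic_higher_deriv[OF holP openB])
  have DD: "\<And>k z. z \<in> B \<Longrightarrow> (D k has_field_derivative D (Suc k) z) (at z)"
    using holomorphic_derivI[OF holD openB] by (simp add: D_def)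
  define g where "g = (\<lambda>k s. Re (D k (complex_of_real s)))"
  define V where "V = U \<inter> {s. \<bar>s\<bar> < \<rho>}"
  have openV: "open V" unfolding V_def using U(1)
  proof -
    have "{s::real. \<bar>s\<bar> < \<rho>} = ball 0 \<rho>" by (auto simp: dist_real_def)
    then show "open (U \<inter> {s. \<bar>s\<bar> < \<rho>})" using U(1) by (metis open_Int open_ball)
  qed
  have V01: "{0..1} \<subseteq> V" using U rho unfolding V_def by auto
  have gder: "\<And>k s. s \<in> V \<Longrightarrow> (g k has_real_derivative g (Suc k) s) (at s)"
  proof -
    fix k s assume s: "s \<in> V"
    have "complex_of_real s \<in> B" using s by (auto simp: V_def B_def)
    have ofr: "(complex_of_real has_vector_derivative 1) (at s)"
    proof -
      have "complex_of_real = (\<lambda>x. x *\<^sub>R 1)" by (auto simp: fun_eq_iff of_real_def)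
      then show ?thesis by (auto intro!: derivative_eq_intros)
    qed
    have "((D k \<circ> complex_of_real) has_vector_derivative (1 * D (Suc k) (complex_of_real s))) (at s)"
      by (rule field_vector_diff_chain_at[OF ofr DD[OF \<open>complex_of_real s \<in> B\<close>]])
    then show "(g k has_real_derivative g (Suc k) s) (at s)"
      unfolding g_def using has_field_derivative_Re by (simp add: o_def)
  qed
  have fder: "\<And>k s. s \<in> V \<Longrightarrow> (fd k has_real_derivative fd (Suc k) s) (at s)"
    using der V_def by auto
  have E: "\<And>W. open W \<Longrightarrow> W \<subseteq> V \<Longrightarrow> (\<forall>s\<in>W. fd 0 s = g 0 s) \<Longrightarrow> \<forall>k. \<forall>s\<in>W. fd k s = g k s"
  proof (intro allI)
    fix W k assume W: "open W" "W \<subseteq> V" "\<forall>s\<in>W. fd 0 s = g 0 s"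
    show "\<forall>s\<in>W. fd k s = g k s"
    proof (induction k)
      case 0 then show ?case using W by blast
    next
      case (Suc k)
      show ?case
      proof
        fix s assume s: "s \<in> W"
        have "(g k has_real_derivative fd (Suc k) s) (at s)"
          by (rule has_field_derivative_transform_within_open[OF fder[of s k] W(1) s])
             (use Suc.IH W s in auto)
        then show "fd (Suc k) s = g (Suc k) s"
          using gder[of s k] W s by (auto intro: DERIV_unique)
      qed
    qed
  qed
  define S where "S = {t\<in>{0..1}. \<forall>k. fd k t = g k t}"
  have "0 \<in> S"
  proof -
    obtain r where r: "r > 0" "\<And>s. \<bar>s - 0\<bar> < r \<Longrightarrow> (\<lambda>k. fd k 0 / fact k * (s - 0) ^ k) sums fd 0 s"
      using loc[of 0] by auto
    obtain r2 where r2: "r2 > 0" "ball 0 r2 \<subseteq> V" using openV V01 by (meson atLeastAtMost_iff openE order_refl subsetD zero_le_one)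
    define W where "W = ball (0::real) (min r r2)"
    have "\<forall>s\<in>W. fd 0 s = g 0 s"
    proof
      fix s assume s: "s \<in> W"
      then have s2: "s \<in> V" using r2 by (auto simp: W_def)
      then have "norm (complex_of_real s) < fps_conv_radius Pf"
        by (intro radlt) (auto simp: V_def)
      from sums_Re[OF sums_eval_fps[OF this]]
      have "(\<lambda>n. a n * s ^ n) sums g 0 s"
        by (simp add: g_def D_def P_def Pf_def flip: of_real_power)
      moreover have "(\<lambda>n. a n * s ^ n) sums fd 0 s"
        using r(2)[of s] s by (simp add: W_def coef mult_ac)
      ultimately show "fd 0 s = g 0 s" using sums_unique2 by blast
    qed
    moreover have "W \<subseteq> V" using r2(2) by (auto simp: W_def subset_iff)
    ultimately have "\<forall>k. \<forall>s\<in>W. fd k s = g k s" using E[of W] by (auto simp: W_def)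
    then show ?thesis using r r2 by (auto simp: S_def W_def)
  qed
  have opS: "openin (top_of_set {0..1}) S"
    unfolding openin_euclidean_subtopology_iff
  proof (intro conjI ballI)
    show "S \<subseteq> {0..1}" by (auto simp: S_def)
    fix t0 assume t0: "t0 \<in> S"
    then have t01: "t0 \<in> {0..1}" by (auto simp: S_def)
    obtain r where r: "r > 0" "\<And>s. \<bar>s - t0\<bar> < r \<Longrightarrow> (\<lambda>k. fd k t0 / fact k * (s - t0) ^ k) sums fd 0 s"
      using loc[OF t01] by auto
    obtain r2 where r2: "r2 > 0" "ball t0 r2 \<subseteq> V" using openV V01 t01 by (meson openE subsetD)
    have t0r: "\<bar>t0\<bar> < \<rho>" using t01 rho by auto
    define W where "W = ball t0 (min (min r r2) (\<rho> - \<bar>t0\<bar>))"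
    have tB: "complex_of_real t0 \<in> B" using V01 t01 by (auto simp: V_def B_def)
    have "\<forall>s\<in>W. fd 0 s = g 0 s"
    proof
      fix s assume s: "s \<in> W"
      then have s2: "s \<in> V" using r2 by (auto simp: W_def)
      then have sB: "complex_of_real s \<in> B" by (auto simp: V_def B_def)
      obtain e where e: "e > 0" "ball (complex_of_real t0) e \<subseteq> B" using openB tB openE by blast
      have "\<exists>R. ball (complex_of_real t0) R \<subseteq> B \<and> complex_of_real s \<in> ball (complex_of_real t0) R"
      proof (intro exI[of _ "\<rho> - \<bar>t0\<bar>"] conjI)
        show "ball (complex_of_real t0) (\<rho> - \<bar>t0\<bar>) \<subseteq> B"
        proof
          fix z assume "z \<in> ball (complex_of_real t0) (\<rho> - \<bar>t0\<bar>)"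
          then have "norm z \<le> norm (complex_of_real t0) + dist (complex_of_real t0) z"
            by (metis dist_0_norm dist_triangle)
          with \<open>z \<in> ball _ _\<close> show "z \<in> B" by (auto simp: B_def)
        qed
        show "complex_of_real s \<in> ball (complex_of_real t0) (\<rho> - \<bar>t0\<bar>)"
        proof -
          have "\<bar>s\<bar> < \<rho>" using s2 by (auto simp: V_def)
          have "\<bar>s - t0\<bar> < \<rho> - \<bar>t0\<bar>"
            using s by (auto simp: W_def dist_norm abs_minus_commute)
          then show ?thesis by (simp add: dist_norm norm_of_real dist_commute flip: of_real_diff)
        qed
      qed
      then obtain R where R: "ball (complex_of_real t0) R \<subseteq> B" "complex_of_real s \<in> ball (complex_of_real t0) R" by blast
      have "(\<lambda>n. (deriv ^^ n) P (complex_of_real t0) / fact n * (complex_of_real s - complex_of_real t0) ^ n) sums P (complex_of_real s)"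
        by (rule holomorphic_power_series[OF holomorphic_on_subset[OF holP R(1)] R(2)])
      from sums_Re[OF this]
      have "(\<lambda>n. g n t0 / fact n * (s - t0) ^ n) sums g 0 s"
        by (simp add: g_def D_def Re_aux flip: of_real_power of_real_diff)
      moreover have "(\<lambda>n. g n t0 / fact n * (s - t0) ^ n) sums fd 0 s"
        using r(2)[of s] s t0 by (simp add: W_def S_def dist_norm abs_minus_commute)
      ultimately show "fd 0 s = g 0 s" using sums_unique2 by blast
    qed
    moreover have "W \<subseteq> V" using r2(2) by (auto simp: W_def subset_iff)
    ultimately have "\<forall>k. \<forall>s\<in>W. fd k s = g k s" using E[of W] by (auto simp: W_def)
    then show "\<exists>e>0. \<forall>x'\<in>{0..1}. dist x' t0 < e \<longrightarrow> x' \<in> S"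
      using r r2 t0r by (intro exI[of _ "min (min r r2) (\<rho> - \<bar>t0\<bar>)"]) (auto simp: S_def W_def dist_commute)
  qed
  have clS: "closedin (top_of_set {0..1}) S"
  proof -
    have cont: "continuous_on {0..1} (\<lambda>t. fd k t - g k t)" for k
    proof (rule continuous_at_imp_continuous_on, intro ballI)
      fix t assume "t \<in> {0..(1::real)}"
      then have "t \<in> V" using V01 by auto
      then show "isCont (\<lambda>t. fd k t - g k t) t"
        using fder[of t k] gder[of t k] by (intro continuous_intros DERIV_isCont) auto
    qed
    have "S = (\<Inter>k\<in>UNIV. {t\<in>{0..1}. fd k t - g k t = 0})" by (auto simp: S_def)
    also have "closedin (top_of_set {0..1}) \<dots>"
      by (intro closedin_INT continuous_closedin_preimage_constant cont) auto
    finally show ?thesis .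
  qed
  have "S = {0..1}"
  proof -
    have "connected {0..1::real}" by simp
    then have "S = {} \<or> S = {0..1}" using connected_clopen[of "{0..1::real}"] opS clS by blast
    then show ?thesis using \<open>0 \<in> S\<close> by blast
  qed
  then have gt: "fd 0 t = g 0 t" using t by (auto simp: S_def)
  have "norm (complex_of_real t) < fps_conv_radius Pf"
    using rho t by (intro radlt) auto
  from sums_Re[OF sums_eval_fps[OF this]]
  have "(\<lambda>n. a n * t ^ n) sums g 0 t"
    by (simp add: g_def D_def P_def Pf_def flip: of_real_power)
  then show ?thesis using gt by simp
qed

lemma sums_vec:
  fixes f :: "nat \<Rightarrow> real^'n"
  assumes "\<And>i. (\<lambda>k. f k $ i) sums (s $ i)"
  shows "f sums s"
  unfolding sums_def
proof (rule vec_tendstoI)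
  fix i
  have "(\<lambda>n. \<Sum>k<n. f k $ i) \<longlonglongrightarrow> s $ i" using assms[of i] unfolding sums_def .
  then show "(\<lambda>n. (\<Sum>k<n. f k) $ i) \<longlonglongrightarrow> s $ i" by (simp add: sum_component)
qed

lemma analytic_HDiff: "real_analytic_on F \<Omega> \<Longrightarrow> HDiff F \<Omega>"
  unfolding real_analytic_on_def HDiff_def by blast

lemma series_rep:
  fixes F :: "real^'n \<Rightarrow> real^'n"
  assumes \<Omega>: "open \<Omega>" and an: "real_analytic_on F \<Omega>"
    and R: "ball xs R \<subseteq> \<Omega>" "norm v < R"
    and rho: "\<rho> > 1" "summable (\<lambda>k. norm (hderiv k F xs (replicate k v) /\<^sub>R fact k) * \<rho> ^ k)"
  shows "(\<lambda>k. hderiv k F xs (replicate k v) /\<^sub>R fact k) sums F (xs + v)"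
proof (rule sums_vec)
  fix i
  have HD: "HDiff F \<Omega>" by (rule analytic_HDiff[OF an])
  define fd where "fd = (\<lambda>k t. hderiv k F (xs + t *\<^sub>R v) (replicate k v) $ i)"
  define U where "U = {t::real. xs + t *\<^sub>R v \<in> ball xs R}"
  have openU: "open U" unfolding U_def
    by (rule open_vimage[of "ball xs R" "\<lambda>t. xs + t *\<^sub>R v", unfolded vimage_def]) (simp, intro continuous_on_add continuous_on_const continuous_on_scaleR continuous_on_id)
  have U01: "{0..1} \<subseteq> U"
  proof
    fix t :: real assume "t \<in> {0..1}"
    then have "norm (t *\<^sub>R v) \<le> norm v" by (auto intro: mult_left_le_one_le)
    then show "t \<in> U" using R(2) by (simp add: U_def dist_norm)
  qed
  have UO: "\<And>t. t \<in> U \<Longrightarrow> xs + t *\<^sub>R v \<in> \<Omega>" using R(1) by (auto simp: U_def)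
  have der: "\<And>k t. t \<in> U \<Longrightarrow> (fd k has_real_derivative fd (Suc k) t) (at t)"
  proof -
    fix k t assume "t \<in> U"
    have "((\<lambda>t. hderiv k F (xs + t *\<^sub>R v) (replicate k v)) has_vector_derivative
          hderiv (Suc k) F (xs + t *\<^sub>R v) (v # replicate k v)) (at t)"
      by (rule hderiv_line[OF \<Omega> HD UO[OF \<open>t \<in> U\<close>]])
    then have "((\<lambda>t. hderiv k F (xs + t *\<^sub>R v) (replicate k v) $ i) has_vector_derivative
          hderiv (Suc k) F (xs + t *\<^sub>R v) (v # replicate k v) $ i) (at t)"
      by (rule bounded_linear.has_vector_derivative[OF bounded_linear_vec_nth])
    then show "(fd k has_real_derivative fd (Suc k) t) (at t)"
      unfolding fd_def by (simp add: has_real_derivative_iff_has_vector_derivative)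
  qed
  have loc: "\<exists>r>0. \<forall>s. \<bar>s - t\<bar> < r \<longrightarrow> (\<lambda>k. fd k t / fact k * (s - t) ^ k) sums fd 0 s"
    if t: "t \<in> {0..1}" for t
  proof -
    define p where "p = xs + t *\<^sub>R v"
    have pO: "p \<in> \<Omega>" using UO U01 t by (auto simp: p_def)
    obtain r where r: "r > 0" "\<And>y. y \<in> ball p r \<Longrightarrow>
        (\<lambda>k. hderiv k F p (replicate k (y - p)) /\<^sub>R fact k) sums F y"
      using an pO unfolding real_analytic_on_def by blast
    have ml: "\<And>k. mlin k (hderiv k F p)" using hderiv_mlin[OF \<Omega> HD pO] by blast
    have nv1: "0 < norm v + 1" using norm_ge_zero[of v] by linarith
    show ?thesis
    proof (intro exI[of _ "r / (norm v + 1)"] conjI allI impI)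
      show "r / (norm v + 1) > 0" using r(1) nv1 by simp
      fix s assume s: "\<bar>s - t\<bar> < r / (norm v + 1)"
      define y where "y = xs + s *\<^sub>R v"
      have yp: "y - p = (s - t) *\<^sub>R v" by (simp add: y_def p_def algebra_simps)
      have "norm (y - p) = \<bar>s - t\<bar> * norm v" by (simp add: yp)
      also have "\<dots> \<le> \<bar>s - t\<bar> * (norm v + 1)" by (simp add: mult_left_mono)
      also have "\<dots> < r" using s nv1 by (simp add: pos_less_divide_eq)
      finally have "y \<in> ball p r" by (simp add: dist_norm norm_minus_commute)
      from r(2)[OF this]
      have "(\<lambda>k. hderiv k F p (replicate k (y - p)) /\<^sub>R fact k) sums F y" .
      then have "(\<lambda>k. ((s - t) ^ k / fact k) *\<^sub>R hderiv k F p (replicate k v)) sums F y"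
        unfolding yp using mlin_replicate_scale[OF ml] by (simp add: divide_inverse_commute)
      from bounded_linear.sums[OF bounded_linear_vec_nth this, of i]
      show "(\<lambda>k. fd k t / fact k * (s - t) ^ k) sums fd 0 s"
        by (simp add: fd_def p_def y_def mult_ac)
    qed
  qed
  define a where "a = (\<lambda>k. fd k 0 / fact k)"
  have sa: "summable (\<lambda>k. \<bar>a k\<bar> * \<rho> ^ k)"
  proof (rule summable_comparison_test[OF _ rho(2)], intro exI allI impI)
    fix k
    have "\<bar>a k\<bar> = \<bar>(hderiv k F xs (replicate k v) /\<^sub>R fact k) $ i\<bar>" by (simp add: a_def fd_def abs_mult divide_inverse_commute)
    also have "\<dots> \<le> norm (hderiv k F xs (replicate k v) /\<^sub>R fact k)" by (rule component_le_norm_cart)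
    finally show "norm (\<bar>a k\<bar> * \<rho> ^ k) \<le> norm (hderiv k F xs (replicate k v) /\<^sub>R fact k) * \<rho> ^ k"
      using rho(1) by (simp add: abs_mult mult_right_mono)
  qed
  have "(\<lambda>k. a k * 1 ^ k) sums fd 0 1"
    by (rule analytic_1d[OF openU U01 der loc _ rho(1) sa]) (auto simp: a_def)
  then show "(\<lambda>k. (hderiv k F xs (replicate k v) /\<^sub>R fact k) $ i) sums (F (xs + v) $ i)"
    by (simp add: a_def fd_def abs_mult divide_inverse_commute)
qed

lemma diffquot_limit:
  fixes F :: "'a::real_normed_vector \<Rightarrow> 'b::real_normed_vector"
  assumes "(F has_derivative F') (at x)"
  shows "((\<lambda>s. (F (x + s *\<^sub>R h) - F x) /\<^sub>R s) \<longlongrightarrow> F' h) (at_right (0::real))"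
proof -
  define g where "g = (\<lambda>s::real. F (x + s *\<^sub>R h))"
  have L: "((\<lambda>s. x + s *\<^sub>R h) has_derivative (\<lambda>s. s *\<^sub>R h)) (at 0)"
    by (auto intro!: derivative_eq_intros)
  have lin: "linear F'" using assms has_derivative_linear by blast
  have "(g has_derivative (\<lambda>s. F' (s *\<^sub>R h))) (at 0)"
    using has_derivative_compose[OF L, of F] assms unfolding g_def by (simp add: o_def)
  then have gd: "(g has_derivative (\<lambda>s. s *\<^sub>R F' h)) (at 0)"
    by (simp add: linear_scale[OF lin])
  then have "((\<lambda>y. ((g y - g 0) - (y - 0) *\<^sub>R F' h) /\<^sub>R norm (y - 0)) \<longlongrightarrow> 0) (at 0)"
    unfolding has_derivative_at_within by blast
  then have lim0: "((\<lambda>y. ((g y - g 0) - y *\<^sub>R F' h) /\<^sub>R norm y) \<longlongrightarrow> 0) (at_right 0)"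
    by (auto intro: tendsto_mono[OF at_within_le_at])
  have "((\<lambda>y. F' h + ((g y - g 0) - y *\<^sub>R F' h) /\<^sub>R norm y) \<longlongrightarrow> F' h + 0) (at_right 0)"
    by (intro tendsto_add tendsto_const lim0)
  moreover have "eventually (\<lambda>y. F' h + ((g y - g 0) - y *\<^sub>R F' h) /\<^sub>R norm y = (F (x + y *\<^sub>R h) - F x) /\<^sub>R y) (at_right (0::real))"
  proof -
    have "eventually (\<lambda>y::real. 0 < y) (at_right 0)" by (rule eventually_at_right_less)
    then show ?thesis
    proof (rule eventually_mono)
      fix y :: real assume "0 < y"
      then show "F' h + ((g y - g 0) - y *\<^sub>R F' h) /\<^sub>R norm y = (F (x + y *\<^sub>R h) - F x) /\<^sub>R y"
        by (simp add: g_def algebra_simps)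
    qed
  qed
  ultimately show ?thesis by (simp add: tendsto_cong)
qed

lemma sums_norm_le:
  fixes d :: "nat \<Rightarrow> 'a::banach"
  assumes "d sums D" "b sums B" "\<And>k. norm (d k) \<le> b k"
  shows "norm D \<le> B"
proof -
  have sb: "summable b" using assms(2) by (simp add: sums_summable)
  have sn: "summable (\<lambda>k. norm (d k))"
    by (rule summable_comparison_test[OF _ sb]) (use assms(3) in auto)
  have "norm D = norm (suminf d)" using assms(1) by (metis sums_unique)
  also have "\<dots> \<le> (\<Sum>k. norm (d k))" by (rule summable_norm[OF sn])
  also have "\<dots> \<le> suminf b" by (rule suminf_le[OF assms(3) sn sb])
  also have "\<dots> = B" using assms(2) by (metis sums_unique)
  finally show ?thesis .
qed

definition gser :: "real \<Rightarrow> real \<Rightarrow> nat \<Rightarrow> real" where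
  "gser \<gamma> r k = (if k < 2 then 0 else \<gamma> ^ (k - 1) * r ^ k)"

lemma gser_sums:
  assumes "\<bar>\<gamma> * r\<bar> < 1"
  shows "gser \<gamma> r sums (\<gamma> * r\<^sup>2 / (1 - \<gamma> * r))"
proof -
  have "(\<lambda>k. (\<gamma> * r) ^ k) sums (1 / (1 - \<gamma> * r))" using geometric_sums[of "\<gamma> * r"] assms by simp
  then have "(\<lambda>k. (\<gamma> * r\<^sup>2) * (\<gamma> * r) ^ k) sums ((\<gamma> * r\<^sup>2) * (1 / (1 - \<gamma> * r)))"
    by (rule sums_mult)
  moreover have "\<And>k. (\<gamma> * r\<^sup>2) * (\<gamma> * r) ^ k = gser \<gamma> r (Suc (Suc k))"
    by (simp add: gser_def power2_eq_square power_mult_distrib algebra_simps)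
  ultimately have A: "(\<lambda>k. gser \<gamma> r (Suc (Suc k))) sums (\<gamma> * r\<^sup>2 / (1 - \<gamma> * r))" by simp
  have B: "(\<lambda>k. gser \<gamma> r (Suc k)) sums (\<gamma> * r\<^sup>2 / (1 - \<gamma> * r) + gser \<gamma> r (Suc 0))"
    using A sums_Suc_iff[of "\<lambda>k. gser \<gamma> r (Suc k)" "\<gamma> * r\<^sup>2 / (1 - \<gamma> * r)"] by simp
  have C: "gser \<gamma> r sums (\<gamma> * r\<^sup>2 / (1 - \<gamma> * r) + gser \<gamma> r (Suc 0) + gser \<gamma> r 0)"
    using B sums_Suc_iff[of "gser \<gamma> r" "\<gamma> * r\<^sup>2 / (1 - \<gamma> * r) + gser \<gamma> r (Suc 0)"] by simp
  then show ?thesis by (simp add: gser_def)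
qed

lemma fgam_deriv:
  assumes "\<gamma> * r < 1"
  shows "((\<lambda>r. \<gamma> * r\<^sup>2 / (1 - \<gamma> * r)) has_real_derivative (1 / (1 - \<gamma> * r)\<^sup>2 - 1)) (at r)"
proof -
  have ne: "1 - \<gamma> * r \<noteq> 0" using assms by simp
  have "((\<lambda>r. \<gamma> * r\<^sup>2 / (1 - \<gamma> * r)) has_real_derivative
      ((\<gamma> * (2 * r)) * (1 - \<gamma> * r) - \<gamma> * r\<^sup>2 * (- \<gamma>)) / (1 - \<gamma> * r)\<^sup>2) (at r)"
    using ne by (auto intro!: derivative_eq_intros simp: power2_eq_square)
  moreover have "((\<gamma> * (2 * r)) * (1 - \<gamma> * r) - \<gamma> * r\<^sup>2 * (- \<gamma>)) / (1 - \<gamma> * r)\<^sup>2 = 1 / (1 - \<gamma> * r)\<^sup>2 - 1"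
  proof -
    have e1: "(\<gamma> * (2 * r)) * (1 - \<gamma> * r) - \<gamma> * r\<^sup>2 * (- \<gamma>) = 1 - (1 - \<gamma> * r)\<^sup>2"
      by (simp add: power2_eq_square algebra_simps)
    have ne2: "(1 - \<gamma> * r)\<^sup>2 \<noteq> 0" using ne by simp
    have e2: "1 / (1 - \<gamma> * r)\<^sup>2 - 1 = (1 - (1 - \<gamma> * r)\<^sup>2) / (1 - \<gamma> * r)\<^sup>2"
      using ne2 by (simp add: diff_divide_distrib)
    show ?thesis unfolding e1 e2 ..
  qed
  ultimately show ?thesis by simp
qed

lemma fg_limit:
  assumes "\<gamma> * r < 1" "c \<ge> 0"
  shows "((\<lambda>s. ((\<gamma> * (r + s * c)\<^sup>2 / (1 - \<gamma> * (r + s * c))) - \<gamma> * r\<^sup>2 / (1 - \<gamma> * r)) / s)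
          \<longlongrightarrow> (1 / (1 - \<gamma> * r)\<^sup>2 - 1) * c) (at_right (0::real))"
proof -
  define fg where "fg = (\<lambda>r. \<gamma> * r\<^sup>2 / (1 - \<gamma> * r))"
  have d: "(fg has_real_derivative (1 / (1 - \<gamma> * r)\<^sup>2 - 1)) (at (r + 0 * c))"
    unfolding fg_def using fgam_deriv[OF assms(1)] by simp
  have "((\<lambda>s. r + s * c) has_real_derivative c) (at 0)"
    by (auto intro!: derivative_eq_intros)
  from DERIV_chain2[OF d this]
  have "((\<lambda>s. fg (r + s * c)) has_real_derivative (1 / (1 - \<gamma> * r)\<^sup>2 - 1) * c) (at 0)" by simp
  then have "((\<lambda>s. (fg (r + (0 + s) * c) - fg (r + 0 * c)) / s) \<longlongrightarrow> (1 / (1 - \<gamma> * r)\<^sup>2 - 1) * c) (at 0)"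
    unfolding DERIV_def by simp
  then have "((\<lambda>s. (fg (r + s * c) - fg r) / s) \<longlongrightarrow> (1 / (1 - \<gamma> * r)\<^sup>2 - 1) * c) (at 0)" by simp
  then show ?thesis unfolding fg_def by (rule tendsto_mono[OF at_within_le_at])
qed

lemma jac_apply:
  assumes "F differentiable (at y)"
  shows "jac F y *v h = frechet_derivative F (at y) h"
proof -
  have "linear (frechet_derivative F (at y))" by (rule linear_frechet_derivative[OF assms])
  from matrix_vector_mul(2)[OF this] show ?thesis unfolding jac_def by metis
qed

lemma gamma_est:
  fixes F :: "real^'n \<Rightarrow> real^'n"
  assumes \<Omega>: "open \<Omega>" and an: "real_analytic_on F \<Omega>"
    and xsO: "xs \<in> \<Omega>" and Fxs: "F xs = 0" and Ainv: "invertible (jac F xs)"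
    and gam: "\<gamma> \<ge> 0" "\<And>k. k \<ge> 2 \<Longrightarrow> mlnorm (matrix_inv (jac F xs)) k F xs \<le> \<gamma> ^ (k - 1)"
    and R: "ball xs R \<subseteq> \<Omega>" "\<gamma> * R \<le> 1"
    and x: "norm (x - xs) < R" "2 * (1 - \<gamma> * norm (x - xs))\<^sup>2 > 1"
  shows "invertible (jac F x) \<and>
    norm (matrix_inv (jac F x) *v F x - (x - xs)) \<le> \<gamma> * (norm (x - xs))\<^sup>2 / (2 * (1 - \<gamma> * norm (x - xs))\<^sup>2 - 1)"
proof -
  have HD: "HDiff F \<Omega>" by (rule analytic_HDiff[OF an])
  have Fdiff: "\<And>y. y \<in> \<Omega> \<Longrightarrow> F differentiable (at y)"
  proof -
    fix y assume "y \<in> \<Omega>"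
    then have "(\<lambda>z. hderiv 0 F z []) differentiable (at y)" using HD unfolding HDiff_def by blast
    then show "F differentiable (at y)" by simp
  qed
  define A where "A = jac F xs"
  define Ai where "Ai = matrix_inv A"
  define c where "c = (\<lambda>k w. hderiv k F xs (replicate k w) /\<^sub>R fact k)"
  define Mp where "Mp = (\<lambda>k hs. Ai *v (hderiv k F xs hs /\<^sub>R fact k))"
  have mlM: "mlin k (Mp k)" for k
  proof -
    have "bounded_linear (\<lambda>u. Ai *v (u /\<^sub>R fact k))"
      by (intro bounded_linear_compose[OF matrix_vector_mul_bounded_linear] bounded_linear_scaleR_right)
    then have L: "linear (\<lambda>u. Ai *v (u /\<^sub>R fact k))" by (rule bounded_linear.linear)
    have "mlin k (hderiv k F xs)" by (rule hderiv_mlin[OF \<Omega> HD xsO])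
    from mlin_comp[OF this L] show ?thesis unfolding Mp_def .
  qed
  have mls: "mlsup k (Mp k) = mlnorm Ai k F xs" for k
    unfolding mlsup_def mlnorm_def Mp_def by simp
  have bnd: "norm (Mp k hs) \<le> \<gamma> ^ (k - 1) * prod_list (map norm hs)" if "k \<ge> 2" "length hs = k" for k hs
  proof -
    have "norm (Mp k hs) \<le> mlsup k (Mp k) * prod_list (map norm hs)" by (rule mlsup_bound[OF mlM that(2)])
    also have "\<dots> \<le> \<gamma> ^ (k - 1) * prod_list (map norm hs)"
      using gam(2)[OF that(1)] unfolding mls Ai_def A_def by (intro mult_right_mono) (auto simp: prod_list_nonneg')
    finally show ?thesis .
  qed
  have Mpc: "Mp k (replicate k w) = Ai *v c k w" for k w by (simp add: Mp_def c_def)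
  have c0: "c 0 w = 0" for w by (simp add: c_def Fxs)
  have AiA: "Ai *v (A *v w) = w" for w unfolding Ai_def A_def by (rule matrix_inv_mv(2)[OF Ainv])
  have c1: "Ai *v c 1 w = w" for w
  proof -
    have "c 1 w = frechet_derivative F (at xs) w" by (simp add: c_def)
    also have "\<dots> = A *v w" unfolding A_def by (rule jac_apply[OF Fdiff[OF xsO], symmetric])
    finally show ?thesis using AiA by simp
  qed
  have ck: "norm (Ai *v c k w) \<le> gser \<gamma> (norm w) k" if "k \<ge> 2" for k w
    using bnd[OF that, of "replicate k w"] that by (simp add: Mpc gser_def prod_list_replicate)
  have gr1: "\<bar>\<gamma> * r\<bar> < 1" if "0 \<le> r" "r < R" for r
  proof (cases "\<gamma> = 0")
    case False
    then have "\<gamma> * r < \<gamma> * R" using gam(1) that by simp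
    then show ?thesis using R(2) gam(1) that by simp
  qed simp
  have rep: "(\<lambda>k. c k w) sums F (xs + w)" if w: "norm w < R" for w
  proof -
    have g1: "\<gamma> * norm w < 1" using gr1[of "norm w"] w by simp
    define \<rho> where "\<rho> = 2 / (1 + \<gamma> * norm w)"
    have gnn: "0 \<le> \<gamma> * norm w" using gam(1) by simp
    have \<rho>1: "\<rho> > 1" using g1 gnn by (simp add: \<rho>_def field_simps)
    have \<rho>0: "\<rho> > 0" using \<rho>1 by simp
    have q1: "\<bar>\<gamma> * (norm w * \<rho>)\<bar> < 1"
    proof -
      have eq: "\<gamma> * (norm w * \<rho>) = 2 * (\<gamma> * norm w) / (1 + \<gamma> * norm w)" by (simp add: \<rho>_def)
      have lt0: "2 * (\<gamma> * norm w) / (1 + \<gamma> * norm w) < 1" using g1 gnn by (simp add: field_simps)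
      have lt: "\<gamma> * (norm w * \<rho>) < 1" using eq lt0 by linarith
      have nn: "0 \<le> \<gamma> * (norm w * \<rho>)" using gnn \<rho>0 by (metis mult.assoc mult_nonneg_nonneg less_imp_le)
      show ?thesis using lt nn by linarith
    qed
    have sg: "summable (\<lambda>k. opnorm A * gser \<gamma> (norm w * \<rho>) k)"
      using gser_sums[OF q1] by (intro summable_mult) (simp add: sums_summable)
    have "summable (\<lambda>k. norm (c k w) * \<rho> ^ k)"
    proof (rule summable_comparison_test[OF _ sg], intro exI[of _ 2] allI impI)
      fix k :: nat assume k: "k \<ge> 2"
      have "norm (c k w) = norm (A *v (Ai *v c k w))"
        unfolding Ai_def A_def using matrix_inv_mv(1)[OF Ainv] by simp
      also have "\<dots> \<le> opnorm A * norm (Ai *v c k w)" by (rule opnorm_bound)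
      also have "\<dots> \<le> opnorm A * gser \<gamma> (norm w) k" by (intro mult_left_mono ck k opnorm_nonneg)
      finally have "norm (c k w) * \<rho> ^ k \<le> opnorm A * gser \<gamma> (norm w) k * \<rho> ^ k"
        using \<rho>0 by (simp add: mult_right_mono)
      also have "\<dots> = opnorm A * gser \<gamma> (norm w * \<rho>) k"
        using k by (simp add: gser_def power_mult_distrib)
      finally show "norm (norm (c k w) * \<rho> ^ k) \<le> opnorm A * gser \<gamma> (norm w * \<rho>) k"
        using \<rho>0 by simp
    qed
    then show ?thesis unfolding c_def by (rule series_rep[OF \<Omega> an R(1) w \<rho>1])
  qed
  have repA: "(\<lambda>k. Ai *v c k w) sums (Ai *v F (xs + w))" if "norm w < R" for w
    by (rule bounded_linear.sums[OF matrix_vector_mul_bounded_linear rep[OF that]])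
  define e where "e = x - xs"
  define \<rho> where "\<rho> = norm e"
  define J where "J = jac F x"
  have xO: "x \<in> \<Omega>" using x(1) R(1) by (auto simp: dist_norm norm_minus_commute)
  have JF: "(F has_derivative (\<lambda>h. J *v h)) (at x)"
    using Fdiff[OF xO] jac_apply[OF Fdiff[OF xO]] unfolding J_def
    by (simp add: frechet_derivative_works)
  have u1: "\<gamma> * \<rho> < 1" using gr1[of \<rho>] x(1) by (simp add: \<rho>_def e_def)
  have unn: "0 \<le> \<gamma> * \<rho>" using gam(1) by (simp add: \<rho>_def)
  define q where "q = 1 / (1 - \<gamma> * \<rho>)\<^sup>2 - 1"
  define fg where "fg = (\<lambda>r. \<gamma> * r\<^sup>2 / (1 - \<gamma> * r))"
  have fgs: "(\<lambda>k. gser \<gamma> r k) sums fg r" if "0 \<le> r" "r < R" for r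
    unfolding fg_def by (rule gser_sums[OF gr1[OF that]])
  have rhoR: "\<rho> < R" using x(1) by (simp add: \<rho>_def e_def)
  have xe: "xs + e = x" by (simp add: e_def)
  have Q1: "norm (Ai *v (J *v h) - h) \<le> q * norm h" for h
  proof (cases "h = 0")
    case True then show ?thesis by simp
  next
    case False
    then have nh: "norm h > 0" by simp
    define \<delta> where "\<delta> = (R - \<rho>) / norm h"
    have \<delta>: "\<delta> > 0" using rhoR nh by (simp add: \<delta>_def)
    define v where "v = (\<lambda>s. Ai *v ((F (x + s *\<^sub>R h) - F x) /\<^sub>R s) - h)"
    define bb where "bb = (\<lambda>s. (fg (\<rho> + s * norm h) - fg \<rho>) / s)"
    have lim1: "(v \<longlongrightarrow> Ai *v (J *v h) - h) (at_right 0)"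
      unfolding v_def
      by (intro tendsto_diff tendsto_const bounded_linear.tendsto[OF matrix_vector_mul_bounded_linear]
          diffquot_limit[OF JF])
    have lim2: "(bb \<longlongrightarrow> q * norm h) (at_right 0)"
      using fg_limit[OF u1, of "norm h"] unfolding bb_def fg_def q_def by simp
    have ev: "eventually (\<lambda>s. norm (v s) \<le> bb s) (at_right 0)"
      unfolding eventually_at_right_field
    proof (intro exI[of _ \<delta>] conjI allI impI)
      show "\<delta> > 0" by fact
      fix s :: real assume s: "s > 0" "s < \<delta>"
      define a where "a = e + s *\<^sub>R h"
      have sh: "s * norm h < R - \<rho>" using s nh by (simp add: \<delta>_def pos_less_divide_eq)
      have na: "norm a \<le> \<rho> + s * norm h"
        unfolding a_def \<rho>_def using s norm_triangle_ineq[of e "s *\<^sub>R h"] by simp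
      have aR: "norm a < R" using na sh by linarith
      have r1: "(\<lambda>k. Ai *v c k a) sums (Ai *v F (x + s *\<^sub>R h))"
        using repA[OF aR] by (simp add: a_def xe[symmetric] add.assoc)
      have r0: "(\<lambda>k. Ai *v c k e) sums (Ai *v F x)"
        using repA[of e] rhoR by (simp add: \<rho>_def xe)
      have r2: "(\<lambda>k. if k = 1 then s *\<^sub>R h else 0) sums (s *\<^sub>R h)"
        using sums_single[of 1 "\<lambda>_. s *\<^sub>R h"] by simp
      have S: "(\<lambda>k. Ai *v c k a - Ai *v c k e - (if k = 1 then s *\<^sub>R h else 0))
          sums (Ai *v F (x + s *\<^sub>R h) - Ai *v F x - s *\<^sub>R h)"
        by (intro sums_diff r1 r0 r2)
      have Bs: "(\<lambda>k. gser \<gamma> (\<rho> + s * norm h) k - gser \<gamma> \<rho> k) sums (fg (\<rho> + s * norm h) - fg \<rho>)"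
        using s nh sh rhoR by (intro sums_diff fgs) (auto simp: \<rho>_def)
      have T: "norm (Ai *v c k a - Ai *v c k e - (if k = 1 then s *\<^sub>R h else 0))
          \<le> gser \<gamma> (\<rho> + s * norm h) k - gser \<gamma> \<rho> k" for k
      proof (cases "k \<ge> 2")
        case True
        have "norm (Mp k (replicate k a) - Mp k (replicate k e))
            \<le> \<gamma> ^ (k - 1) * ((norm e + norm (a - e)) ^ k - norm e ^ k)"
          by (rule mlin_diff_bound[OF mlM]) (use gam(1) bnd True in auto)
        moreover have "norm (a - e) = s * norm h" using s by (simp add: a_def)
        ultimately show ?thesis using True
          by (simp add: Mpc gser_def \<rho>_def algebra_simps)
      next
        case False
        then have "k = 0 \<or> k = 1" by auto
        then show ?thesis
        proof
          assume "k = 0" then show ?thesis by (simp add: c0 gser_def)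
        next
          assume "k = 1"
          have c1': "Ai *v c (Suc 0) w = w" for w using c1[of w] by simp
          from \<open>k = 1\<close> show ?thesis by (simp add: c1' gser_def a_def)
        qed
      qed
      have N: "norm (Ai *v F (x + s *\<^sub>R h) - Ai *v F x - s *\<^sub>R h) \<le> fg (\<rho> + s * norm h) - fg \<rho>"
        by (rule sums_norm_le[OF S Bs T])
      have "v s = (1 / s) *\<^sub>R (Ai *v F (x + s *\<^sub>R h) - Ai *v F x - s *\<^sub>R h)"
        using s by (simp add: v_def algebra_simps divide_inverse)
      then have "norm (v s) = (1 / s) * norm (Ai *v F (x + s *\<^sub>R h) - Ai *v F x - s *\<^sub>R h)"
        using s by simp
      also have "\<dots> \<le> (1 / s) * (fg (\<rho> + s * norm h) - fg \<rho>)"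
        using N s by (intro mult_left_mono) auto
      finally show "norm (v s) \<le> bb s" by (simp add: bb_def)
    qed
    show ?thesis
      by (rule tendsto_le[OF trivial_limit_at_right_real lim2 tendsto_norm[OF lim1] ev])
  qed
  have fg_fact: "q * \<rho> - fg \<rho> = \<gamma> * \<rho>\<^sup>2 / (1 - \<gamma> * \<rho>)\<^sup>2"
  proof -
    have ne: "1 - \<gamma> * \<rho> \<noteq> 0" using u1 by simp
    have gen: "\<And>t a b c::real. t \<noteq> 0 \<Longrightarrow> a * (1 / t\<^sup>2 - 1) - c / t = (a - a * t\<^sup>2 - c * t) / t\<^sup>2"
      by (simp add: field_simps power2_eq_square power4_eq_xxxx)
    have num: "\<rho> - \<rho> * (1 - \<gamma> * \<rho>)\<^sup>2 - \<gamma> * \<rho>\<^sup>2 * (1 - \<gamma> * \<rho>) = \<gamma> * \<rho>\<^sup>2"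
      by (simp add: power2_eq_square algebra_simps)
    have "q * \<rho> - fg \<rho> = \<rho> * (1 / (1 - \<gamma> * \<rho>)\<^sup>2 - 1) - \<gamma> * \<rho>\<^sup>2 / (1 - \<gamma> * \<rho>)"
      by (simp add: q_def fg_def mult.commute)
    also have "\<dots> = \<gamma> * \<rho>\<^sup>2 / (1 - \<gamma> * \<rho>)\<^sup>2" unfolding gen[OF ne] num ..
    finally show ?thesis .
  qed
  have Q2: "norm (Ai *v (J *v e) - Ai *v F x) \<le> \<gamma> * \<rho>\<^sup>2 / (1 - \<gamma> * \<rho>)\<^sup>2"
  proof (cases "e = 0")
    case True
    then have "x = xs" by (simp add: e_def)
    then show ?thesis using True gam(1) by (simp add: Fxs)
  next
    case False
    then have nr: "\<rho> > 0" by (simp add: \<rho>_def)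
    define \<delta> where "\<delta> = (R - \<rho>) / \<rho>"
    have \<delta>: "\<delta> > 0" using rhoR nr by (simp add: \<delta>_def)
    define v where "v = (\<lambda>s. Ai *v ((F (x + s *\<^sub>R e) - F x) /\<^sub>R s) - Ai *v F x)"
    define bb where "bb = (\<lambda>s. (fg (\<rho> + s * \<rho>) - fg \<rho>) / s - fg \<rho>)"
    have lim1: "(v \<longlongrightarrow> Ai *v (J *v e) - Ai *v F x) (at_right 0)"
      unfolding v_def
      by (intro tendsto_diff tendsto_const bounded_linear.tendsto[OF matrix_vector_mul_bounded_linear]
          diffquot_limit[OF JF])
    have lim2: "(bb \<longlongrightarrow> q * \<rho> - fg \<rho>) (at_right 0)"
      unfolding bb_def using fg_limit[OF u1, of \<rho>] nr unfolding fg_def q_def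
      by (intro tendsto_diff tendsto_const) simp_all
    have ev: "eventually (\<lambda>s. norm (v s) \<le> bb s) (at_right 0)"
      unfolding eventually_at_right_field
    proof (intro exI[of _ \<delta>] conjI allI impI)
      show "\<delta> > 0" by fact
      fix s :: real assume s: "s > 0" "s < \<delta>"
      define a where "a = (1 + s) *\<^sub>R e"
      have sr: "s * \<rho> < R - \<rho>" using s nr by (simp add: \<delta>_def pos_less_divide_eq)
      have "norm a = (1 + s) * \<rho>" using s by (simp add: a_def \<rho>_def)
      then have na: "norm a = \<rho> + s * \<rho>" by (simp add: algebra_simps)
      have aR: "norm a < R" using na sr by linarith
      have xa: "xs + a = x + s *\<^sub>R e" by (simp add: a_def e_def algebra_simps)
      define u where "u = (\<lambda>k. Ai *v c k e)"
      have cs: "Ai *v c k a = (1 + s) ^ k *\<^sub>R u k" for k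
      proof -
        have "hderiv k F xs (replicate k a) = (1 + s) ^ k *\<^sub>R hderiv k F xs (replicate k e)"
          unfolding a_def by (rule mlin_replicate_scale[OF hderiv_mlin[OF \<Omega> HD xsO]])
        then show ?thesis by (simp add: u_def c_def matrix_vector_mult_scaleR)
      qed
      have r1: "(\<lambda>k. (1 + s) ^ k *\<^sub>R u k) sums (Ai *v F (x + s *\<^sub>R e))"
        using repA[OF aR] by (simp add: cs xa)
      have r0: "u sums (Ai *v F x)"
        using repA[of e] rhoR by (simp add: u_def \<rho>_def xe)
      define d where "d = (\<lambda>k. (1 / s) *\<^sub>R ((1 + s) ^ k *\<^sub>R u k - u k) - u k)"
      have S: "d sums ((1 / s) *\<^sub>R (Ai *v F (x + s *\<^sub>R e) - Ai *v F x) - Ai *v F x)"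
        unfolding d_def by (intro sums_diff sums_scaleR_right r1 r0)
      have vs: "v s = (1 / s) *\<^sub>R (Ai *v F (x + s *\<^sub>R e) - Ai *v F x) - Ai *v F x"
        by (simp add: v_def matrix_vector_mult_diff_distrib matrix_vector_mult_scaleR divide_inverse)
      define co where "co = (\<lambda>k::nat. ((1 + s) ^ k - 1) / s - 1)"
      have dco: "d k = co k *\<^sub>R u k" for k
        using s by (simp add: d_def co_def algebra_simps divide_inverse)
      have co0: "co k \<ge> 0" if "k \<ge> 1" for k
      proof -
        have "1 + real k * s \<le> (1 + s) ^ k" by (rule Bernoulli_inequality) (use s in simp)
        moreover have "s \<le> real k * s" using that s by simp
        ultimately have "s \<le> (1 + s) ^ k - 1" by linarith
        then show ?thesis using s by (simp add: co_def field_simps)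
      qed
      have Bs: "(\<lambda>k. (gser \<gamma> (\<rho> + s * \<rho>) k - gser \<gamma> \<rho> k) / s - gser \<gamma> \<rho> k) sums bb s"
        unfolding bb_def using s nr sr rhoR
        by (intro sums_diff sums_divide fgs) auto
      have T: "norm (d k) \<le> (gser \<gamma> (\<rho> + s * \<rho>) k - gser \<gamma> \<rho> k) / s - gser \<gamma> \<rho> k" for k
      proof (cases "k \<ge> 2")
        case True
        have g: "gser \<gamma> (\<rho> + s * \<rho>) k = (1 + s) ^ k * gser \<gamma> \<rho> k"
        proof -
          have "\<rho> + s * \<rho> = (1 + s) * \<rho>" by (simp add: algebra_simps)
          then show ?thesis using True by (simp add: gser_def power_mult_distrib)
        qed
        have "(gser \<gamma> (\<rho> + s * \<rho>) k - gser \<gamma> \<rho> k) / s - gser \<gamma> \<rho> k = co k * gser \<gamma> \<rho> k"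
          unfolding g co_def using s by (simp add: field_simps)
        moreover have "norm (d k) = co k * norm (u k)" using co0[of k] True by (simp add: dco)
        moreover have "norm (u k) \<le> gser \<gamma> \<rho> k" using ck[OF True, of e] by (simp add: u_def \<rho>_def)
        ultimately show ?thesis using co0[of k] True by (simp add: mult_left_mono)
      next
        case False
        then have "k = 0 \<or> k = 1" by auto
        then show ?thesis
        proof
          assume "k = 0" then show ?thesis by (simp add: d_def u_def c0 gser_def)
        next
          assume "k = 1"
          then show ?thesis using s by (simp add: dco co_def gser_def)
        qed
      qed
      have "norm ((1 / s) *\<^sub>R (Ai *v F (x + s *\<^sub>R e) - Ai *v F x) - Ai *v F x) \<le> bb s"
        by (rule sums_norm_le[OF S Bs T])
      then show "norm (v s) \<le> bb s" by (simp add: vs)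
    qed
    have "norm (Ai *v (J *v e) - Ai *v F x) \<le> q * \<rho> - fg \<rho>"
      by (rule tendsto_le[OF trivial_limit_at_right_real lim2 tendsto_norm[OF lim1] ev])
    then show ?thesis using fg_fact by simp
  qed
  have u2: "2 * (1 - \<gamma> * \<rho>)\<^sup>2 > 1" using x(2) by (simp add: \<rho>_def e_def)
  have t0: "(1 - \<gamma> * \<rho>)\<^sup>2 > 0" using u1 by simp
  have omq: "1 - q = (2 * (1 - \<gamma> * \<rho>)\<^sup>2 - 1) / (1 - \<gamma> * \<rho>)\<^sup>2"
    unfolding q_def using t0 by (simp add: field_simps)
  have q1: "1 - q > 0" unfolding omq using u2 t0 by simp
  have low: "(1 - q) * norm h \<le> norm (Ai *v (J *v h))" for h
  proof -
    have "norm h - norm (Ai *v (J *v h)) \<le> norm (Ai *v (J *v h) - h)"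
      by (metis norm_minus_commute norm_triangle_ineq2)
    then show ?thesis using Q1[of h] by (simp add: algebra_simps)
  qed
  have invJ: "invertible J"
  proof (rule invertible_of_inj)
    fix h assume "J *v h = 0"
    then have "(1 - q) * norm h \<le> 0" using low[of h] by simp
    then have "norm h \<le> 0" using q1 by (simp add: mult_le_0_iff)
    then show "h = 0" by simp
  qed
  define z where "z = matrix_inv J *v F x"
  have Jz: "J *v z = F x" unfolding z_def by (rule matrix_inv_mv(1)[OF invJ])
  have "(1 - q) * norm (z - e) \<le> norm (Ai *v (J *v (z - e)))" by (rule low)
  also have "\<dots> = norm (Ai *v (J *v e) - Ai *v F x)"
    by (simp add: Jz matrix_vector_mult_diff_distrib norm_minus_commute)
  also have "\<dots> \<le> \<gamma> * \<rho>\<^sup>2 / (1 - \<gamma> * \<rho>)\<^sup>2" by (rule Q2)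
  finally have "norm (z - e) \<le> (\<gamma> * \<rho>\<^sup>2 / (1 - \<gamma> * \<rho>)\<^sup>2) / (1 - q)"
    by (simp only: pos_le_divide_eq[OF q1] mult.commute)
  also have "\<dots> = \<gamma> * \<rho>\<^sup>2 / (2 * (1 - \<gamma> * \<rho>)\<^sup>2 - 1)"
    unfolding omq using t0 u2 by (simp add: field_simps)
  finally show ?thesis using invJ by (simp add: z_def J_def e_def \<rho>_def)
qed

lemma condg_props:
  assumes "condg_run C y \<epsilon> z w" "convex C" "\<epsilon> \<ge> 0" "z \<in> C"
  shows "w \<in> C \<and> gmin C y w \<ge> - \<epsilon>"
  using assms
proof (induction rule: condg_run.induct)
  case (stop z) then show ?case by simp
next
  case (step u z \<alpha> w)
  have "- gmin C y z > 0" using step.hyps(3) step.prems(2) by linarith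
  then have "gmin C y z / (norm (u - z))\<^sup>2 \<le> 0" by (intro divide_nonpos_nonneg) auto
  then have a0: "\<alpha> \<ge> 0" using step.hyps(4) by simp
  have a1: "\<alpha> \<le> 1" using step.hyps(4) by simp
  have "z + \<alpha> *\<^sub>R (u - z) = (1 - \<alpha>) *\<^sub>R z + \<alpha> *\<^sub>R u" by (simp add: algebra_simps)
  also have "\<dots> \<in> C" using step.prems(1) step.prems(3) step.hyps(1) a0 a1
    unfolding convex_def by auto
  finally show ?case using step.IH step.prems by blast
qed

lemma condg_dist:
  fixes C :: "'a::real_inner set"
  assumes "w \<in> C" "gmin C y w \<ge> - \<epsilon>" "compact C" "xs \<in> C" "\<epsilon> \<ge> 0"
  shows "norm (w - xs) \<le> norm (y - xs) + sqrt \<epsilon>"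
proof -
  have "{inner (w - y) (u - w) | u. u \<in> C} = (\<lambda>u. inner (w - y) (u - w)) ` C" by auto
  moreover have "compact ((\<lambda>u. inner (w - y) (u - w)) ` C)"
    by (rule compact_continuous_image[OF _ assms(3)]) (intro continuous_intros)
  ultimately have bdd: "bdd_below {inner (w - y) (u - w) | u. u \<in> C}"
    by (metis bounded_imp_bdd_below compact_imp_bounded)
  have "gmin C y w \<le> inner (w - y) (xs - w)"
    unfolding gmin_def by (rule cInf_lower[OF _ bdd]) (use assms(4) in blast)
  then have i1: "inner (w - y) (w - xs) \<le> \<epsilon>" using assms(2)
    by (simp add: inner_diff_right)
  define d where "d = norm (w - xs)"
  define a where "a = norm (y - xs)"
  have "d\<^sup>2 = inner (w - xs) (w - xs)" by (simp add: d_def power2_norm_eq_inner)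
  also have "\<dots> = inner (w - y) (w - xs) + inner (y - xs) (w - xs)"
    by (simp add: inner_diff_left inner_diff_right algebra_simps)
  also have "\<dots> \<le> \<epsilon> + a * d"
    using i1 norm_cauchy_schwarz[of "y - xs" "w - xs"] by (simp add: a_def d_def)
  finally have q: "d\<^sup>2 \<le> \<epsilon> + a * d" .
  show ?thesis
  proof (rule ccontr)
    assume "\<not> ?thesis"
    then have gt: "d > a + sqrt \<epsilon>" by (simp add: d_def a_def)
    have s0: "sqrt \<epsilon> \<ge> 0" using assms(5) by simp
    have a0: "a \<ge> 0" by (simp add: a_def)
    have dpos: "d > 0" using gt a0 s0 by linarith
    have "d * d > d * (a + sqrt \<epsilon>)" using gt dpos by (intro mult_strict_left_mono) auto
    moreover have "d * sqrt \<epsilon> \<ge> sqrt \<epsilon> * sqrt \<epsilon>" using gt a0 s0 by (intro mult_right_mono) auto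
    moreover have "sqrt \<epsilon> * sqrt \<epsilon> = \<epsilon>" using assms(5) by simp
    ultimately have "d\<^sup>2 > \<epsilon> + a * d" by (simp add: power2_eq_square algebra_simps)
    then show False using q by simp
  qed
qed

lemma mv_neg: "(A::real^'n^'m) *v (- v) = - (A *v v)"
  using matrix_vector_mult_diff_distrib[of A 0 v] by simp

lemma newton_step:
  fixes J M P :: "real^'n^'n"
  assumes invJ: "invertible J" and gN: "norm (matrix_inv J *v Fx - e) \<le> N"
    and Minv: "invertible M" and Ns: "M *v s = - Fx + r"
    and M1: "opnorm (matrix_inv M ** J) \<le> \<omega>1" and M2: "opnorm (matrix_inv M ** J - mat 1) \<le> \<omega>2"
    and Pinv: "invertible P" and res: "norm (P *v r) \<le> \<eta> * norm (P *v Fx)"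
    and eta: "\<eta> * cond (P ** J) \<le> vt" and vt0: "0 \<le> vt"
  shows "norm s \<le> \<omega>1 * (1 + vt) * (norm e + N) \<and>
         norm (e + s) \<le> \<omega>2 * norm e + \<omega>1 * N + \<omega>1 * vt * (norm e + N)"
proof -
  define Mi where "Mi = matrix_inv M"
  define Ji where "Ji = matrix_inv J"
  define g where "g = Ji *v Fx"
  define B where "B = Mi ** J"
  have Jg: "J *v g = Fx" unfolding g_def Ji_def by (rule matrix_inv_mv(1)[OF invJ])
  have w0: "\<omega>1 \<ge> 0" using M1 opnorm_nonneg[of "matrix_inv M ** J"] by linarith
  have B1: "norm (B *v v) \<le> \<omega>1 * norm v" for v
    using opnorm_bound[of B v] M1 unfolding B_def Mi_def
    by (meson mult_right_mono norm_ge_zero order_trans)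
  have B2: "norm (B *v v - v) \<le> \<omega>2 * norm v" for v
  proof -
    have "B *v v - v = (B - mat 1) *v v" by (simp add: matrix_vector_mult_diff_rdistrib)
    then show ?thesis using opnorm_bound[of "B - mat 1" v] M2 unfolding B_def Mi_def
      by (metis mult_right_mono norm_ge_zero order_trans)
  qed
  have ng: "norm g \<le> norm e + N"
    using gN norm_triangle_ineq[of "g - e" e] unfolding g_def Ji_def by simp
  define K where "K = P ** J"
  have invK: "invertible K" unfolding K_def by (rule invertible_mult[OF Pinv invJ])
  define w where "w = Ji *v r"
  have Jw: "J *v w = r" unfolding w_def Ji_def by (rule matrix_inv_mv(1)[OF invJ])
  have Kw: "K *v w = P *v r" by (simp add: K_def Jw flip: matrix_vector_mul_assoc)
  have wK: "w = matrix_inv K *v (P *v r)"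
    using matrix_inv_mv(2)[OF invK, of w] Kw by simp
  have nw: "norm w \<le> opnorm (matrix_inv K) * norm (P *v r)"
    using opnorm_bound[of "matrix_inv K" "P *v r"] wK by simp
  have PF: "norm (P *v Fx) \<le> opnorm K * norm g"
    using opnorm_bound[of K g] by (simp add: K_def Jg flip: matrix_vector_mul_assoc)
  have nw2: "norm w \<le> vt * norm g"
  proof (cases "\<eta> \<ge> 0")
    case True
    have "norm w \<le> opnorm (matrix_inv K) * (\<eta> * norm (P *v Fx))"
      using nw res opnorm_nonneg[of "matrix_inv K"] by (meson mult_left_mono order_trans)
    also have "\<dots> \<le> opnorm (matrix_inv K) * (\<eta> * (opnorm K * norm g))"
      using PF True opnorm_nonneg[of "matrix_inv K"] by (intro mult_left_mono) auto
    also have "\<dots> = (\<eta> * cond K) * norm g" by (simp add: cond_def mult_ac)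
    also have "\<dots> \<le> vt * norm g" using eta by (intro mult_right_mono) (auto simp: K_def)
    finally show ?thesis .
  next
    case False
    then have "\<eta> * norm (P *v Fx) \<le> 0" by (simp add: mult_nonpos_nonneg)
    then have "norm (P *v r) \<le> 0" using res by linarith
    then have "P *v r = 0" by simp
    then have "norm w \<le> 0" using nw by simp
    then show ?thesis using vt0 by (simp add: zero_le_mult_iff)
  qed
  have MiF: "Mi *v Fx = B *v g" by (simp add: B_def Jg flip: matrix_vector_mul_assoc)
  have Mir: "Mi *v r = B *v w" by (simp add: B_def Jw flip: matrix_vector_mul_assoc)
  have s_eq: "s = - (B *v g) + B *v w"
  proof -
    have "s = Mi *v (M *v s)" unfolding Mi_def by (rule matrix_inv_mv(2)[OF Minv, symmetric])
    also have "\<dots> = - (Mi *v Fx) + Mi *v r" by (simp add: Ns matrix_vector_mult_diff_distrib)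
    finally show ?thesis by (simp add: MiF Mir)
  qed
  have "norm s \<le> norm (B *v g) + norm (B *v w)"
    unfolding s_eq by (metis norm_minus_cancel norm_triangle_ineq)
  also have "\<dots> \<le> \<omega>1 * norm g + \<omega>1 * (vt * norm g)"
    using B1[of g] B1[of w] nw2 w0 by (meson add_mono mult_left_mono order_trans)
  also have "\<dots> = \<omega>1 * (1 + vt) * norm g" by (simp add: algebra_simps)
  also have "\<dots> \<le> \<omega>1 * (1 + vt) * (norm e + N)" using ng w0 vt0 by (intro mult_left_mono) auto
  finally have S1: "norm s \<le> \<omega>1 * (1 + vt) * (norm e + N)" .
  have "e + s = - (B *v e - e) + B *v (e - g) + B *v w"
    by (simp add: s_eq matrix_vector_mult_diff_distrib algebra_simps)
  then have "norm (e + s) \<le> norm (- (B *v e - e) + B *v (e - g)) + norm (B *v w)"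
    by (metis norm_triangle_ineq)
  also have "norm (- (B *v e - e) + B *v (e - g)) \<le> norm (B *v e - e) + norm (B *v (e - g))"
    by (metis norm_minus_cancel norm_triangle_ineq)
  finally have "norm (e + s) \<le> norm (B *v e - e) + norm (B *v (e - g)) + norm (B *v w)" by simp
  also have "\<dots> \<le> \<omega>2 * norm e + \<omega>1 * N + \<omega>1 * (vt * (norm e + N))"
  proof -
    have "norm (B *v (e - g)) \<le> \<omega>1 * N"
      using B1[of "e - g"] gN w0 unfolding g_def Ji_def
      by (metis mult_left_mono norm_minus_commute order_trans)
    moreover have "norm (B *v w) \<le> \<omega>1 * (vt * (norm e + N))"
      using B1[of w] nw2 ng w0 vt0 by (meson mult_left_mono order_trans)
    ultimately show ?thesis using B2[of e] by linarith
  qed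
  finally show ?thesis using S1 by (simp add: algebra_simps)
qed

lemma mlnorm_nonneg:
  assumes "open \<Omega>" "HDiff F \<Omega>" "x \<in> \<Omega>"
  shows "0 \<le> mlnorm A k F x"
proof -
  have "bounded_linear (\<lambda>u. A *v (u /\<^sub>R fact k))"
    by (intro bounded_linear_compose[OF matrix_vector_mul_bounded_linear] bounded_linear_scaleR_right)
  then have L: "linear (\<lambda>u. A *v (u /\<^sub>R fact k))" by (rule bounded_linear.linear)
  have "mlin k (\<lambda>hs. A *v (hderiv k F x hs /\<^sub>R fact k))"
    by (rule mlin_comp[OF hderiv_mlin[OF assms] L])
  from mlsup_nonneg[OF this] show ?thesis by (simp add: mlsup_def mlnorm_def)
qed

lemma root_alg:
  fixes a b u :: real
  assumes b: "b > 0" and K: "a - 4 * b > 0" and u: "0 \<le> u" "u < (a - sqrt (a\<^sup>2 - 8 * b\<^sup>2)) / (4 * b)"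
  shows "2 * (1 - u)\<^sup>2 > 1 \<and> (a - 4 * b) * u < b * (2 * (1 - u)\<^sup>2 - 1)"
proof -
  have a0: "a > 0" using K b by linarith
  have d0: "a\<^sup>2 - 8 * b\<^sup>2 \<ge> 0"
  proof -
    have "a\<^sup>2 \<ge> (4 * b)\<^sup>2" using K b by (intro power_mono) auto
    then have A: "16 * (b * b) \<le> a * a" by (simp add: power2_eq_square)
    have bb: "0 \<le> b * b" by simp
    have eq: "a\<^sup>2 - 8 * b\<^sup>2 = a * a - 8 * (b * b)" by (simp add: power2_eq_square)
    show ?thesis using eq A bb by linarith
  qed
  define sq where "sq = sqrt (a\<^sup>2 - 8 * b\<^sup>2)"
  have sq0: "sq \<ge> 0" using d0 by (simp add: sq_def)
  have sq2: "sq\<^sup>2 = a\<^sup>2 - 8 * b\<^sup>2" using d0 by (simp add: sq_def)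
  define r1 where "r1 = (a - sq) / (4 * b)"
  define r2 where "r2 = (a + sq) / (4 * b)"
  have ur1: "u < r1" using u by (simp add: r1_def sq_def)
  have r12: "r1 \<le> r2" using sq0 b by (simp add: r1_def r2_def divide_right_mono)
  have "(u - r1) * (u - r2) > 0" using ur1 r12 by (intro mult_neg_neg) auto
  moreover have "(u - r1) * (u - r2) = u\<^sup>2 - u * (a / (2 * b)) + (a\<^sup>2 - sq\<^sup>2) / (16 * b\<^sup>2)"
    using b by (simp add: r1_def r2_def field_simps power2_eq_square)
  moreover have "(a\<^sup>2 - sq\<^sup>2) / (16 * b\<^sup>2) = 1 / 2" using b by (simp add: sq2 field_simps)
  ultimately have "u\<^sup>2 - u * (a / (2 * b)) + 1 / 2 > 0" by simp
  then have "2 * b * (u\<^sup>2 - u * (a / (2 * b)) + 1 / 2) > 0" using b by simp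
  moreover have "2 * b * (u\<^sup>2 - u * (a / (2 * b)) + 1 / 2) = 2 * b * u\<^sup>2 - 2 * b * (u * (a / (2 * b))) + b"
    by (simp add: algebra_simps)
  moreover have "2 * b * (u * (a / (2 * b))) = a * u" using b by simp
  ultimately have p: "2 * b * u\<^sup>2 - a * u + b > 0" by simp
  have e: "b * (2 * (1 - u)\<^sup>2 - 1) - (a - 4 * b) * u = 2 * b * u\<^sup>2 - a * u + b"
    by (simp add: power2_eq_square algebra_simps)
  have c2: "(a - 4 * b) * u < b * (2 * (1 - u)\<^sup>2 - 1)" using p e by linarith
  moreover have "(a - 4 * b) * u \<ge> 0" using K u by simp
  ultimately have "b * (2 * (1 - u)\<^sup>2 - 1) > 0" by linarith
  then have "2 * (1 - u)\<^sup>2 - 1 > 0" using b by (simp add: zero_less_mult_iff)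
  then show ?thesis using c2 by simp
qed

lemma limsup_lemma:
  fixes r \<rho> \<theta> :: "nat \<Rightarrow> real"
  assumes bnd: "\<And>k. r k \<le> \<alpha> + \<beta> * sqrt (\<theta> k) + K * \<rho> k"
    and \<beta>: "\<beta> \<ge> 0" and K: "K \<ge> 0" and \<rho>: "\<rho> \<longlonglongrightarrow> 0"
    and \<theta>: "\<And>k. 0 \<le> \<theta> k" "\<And>k. \<theta> k \<le> \<Theta>"
  shows "limsup (\<lambda>k. ereal (r k)) \<le> ereal (\<alpha> + \<beta> * sqrt (2 * real_of_ereal (limsup (\<lambda>k. ereal (\<theta> k)))))"
proof -
  define L where "L = limsup (\<lambda>k. ereal (\<theta> k))"
  have L0: "0 \<le> L" unfolding L_def by (rule le_Limsup) (use \<theta> in auto)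
  have L1: "L \<le> ereal \<Theta>" unfolding L_def
  proof (rule Limsup_le_iff[THEN iffD2], intro allI impI)
    fix y assume y: "y > ereal \<Theta>"
    have "\<forall>k. ereal (\<theta> k) < y" using \<theta>(2) y by (meson ereal_less_eq(3) le_less_trans)
    then show "\<forall>\<^sub>F k in sequentially. y > ereal (\<theta> k)" by (simp add: always_eventually)
  qed
  define t where "t = real_of_ereal L"
  have Lt: "L = ereal t" using L0 L1 unfolding t_def by (cases L) auto
  have t0: "t \<ge> 0" using L0 Lt by simp
  show ?thesis
  proof (rule Limsup_le_iff[THEN iffD2], intro allI impI)
    fix y assume y: "y > ereal (\<alpha> + \<beta> * sqrt (2 * real_of_ereal (limsup (\<lambda>k. ereal (\<theta> k)))))"
    show "\<forall>\<^sub>F k in sequentially. y > ereal (r k)"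
    proof (cases y)
      case PInf then show ?thesis by simp
    next
      case MInf then show ?thesis using y by simp
    next
      case (real y')
      define C where "C = \<alpha> + \<beta> * sqrt t"
      have "sqrt t \<le> sqrt (2 * t)" using t0 by simp
      then have "C \<le> \<alpha> + \<beta> * sqrt (2 * t)" using \<beta> unfolding C_def by (simp add: mult_left_mono)
      moreover have "y' > \<alpha> + \<beta> * sqrt (2 * t)" using y real by (simp add: t_def L_def)
      ultimately have yC: "y' > C" by linarith
      define \<epsilon> where "\<epsilon> = y' - C"
      have \<epsilon>: "\<epsilon> > 0" using yC by (simp add: \<epsilon>_def)
      define \<delta> where "\<delta> = (\<epsilon> / (2 * (\<beta> + 1)))\<^sup>2"
      have \<delta>0: "\<delta> > 0" using \<epsilon> \<beta> by (simp add: \<delta>_def)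
      have sd: "\<beta> * sqrt \<delta> < \<epsilon> / 2"
      proof -
        have "sqrt \<delta> = \<epsilon> / (2 * (\<beta> + 1))" using \<epsilon> \<beta> by (simp add: \<delta>_def)
        then have "\<beta> * sqrt \<delta> = \<epsilon> / 2 * (\<beta> / (\<beta> + 1))" using \<beta> by (simp add: field_simps)
        also have "\<dots> < \<epsilon> / 2" using \<epsilon> \<beta> by (simp add: field_simps)
        finally show ?thesis .
      qed
      define \<eta> where "\<eta> = \<epsilon> / (2 * (K + 1))"
      have \<eta>0: "\<eta> > 0" using \<epsilon> K by (simp add: \<eta>_def)
      have lim: "\<forall>y>ereal t. \<forall>\<^sub>F x in sequentially. ereal (\<theta> x) < y"
        using Limsup_le_iff[THEN iffD1, OF order_refl[of "limsup (\<lambda>k. ereal (\<theta> k))"]] Lt unfolding L_def by simp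
      have e1: "\<forall>\<^sub>F k in sequentially. ereal (t + \<delta>) > ereal (\<theta> k)"
        using lim[rule_format, of "ereal (t + \<delta>)"] \<delta>0 by simp
      have e2: "\<forall>\<^sub>F k in sequentially. \<rho> k < \<eta>" using order_tendstoD(2)[OF \<rho> \<eta>0] .
      show ?thesis
      proof (rule eventually_mono[OF eventually_conj[OF e1 e2]])
        fix k assume k: "ereal (t + \<delta>) > ereal (\<theta> k) \<and> \<rho> k < \<eta>"
        have "sqrt (\<theta> k) \<le> sqrt (t + \<delta>)" using k by simp
        also have "\<dots> \<le> sqrt t + sqrt \<delta>" using t0 \<delta>0 by (intro sqrt_add_le_add_sqrt) auto
        finally have s1: "\<beta> * sqrt (\<theta> k) \<le> \<beta> * sqrt t + \<beta> * sqrt \<delta>"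
          using \<beta> by (simp add: mult_left_mono distrib_left[symmetric])
        have "K * \<rho> k \<le> K * \<eta>" using k K by (simp add: mult_left_mono)
        also have "\<dots> < \<epsilon> / 2" using \<epsilon> K by (simp add: \<eta>_def field_simps)
        finally have s2: "K * \<rho> k < \<epsilon> / 2" .
        have yy: "y' = C + \<epsilon>" by (simp add: \<epsilon>_def)
        have cc: "C = \<alpha> + \<beta> * sqrt t" by (simp add: C_def)
        have "r k < y'" using bnd[of k] s1 s2 sd yy cc by linarith
        then show "y > ereal (r k)" using real by simp
      qed
    qed
  qed
qed

theorem corollary2:
  fixes F :: "real^'n \<Rightarrow> real^'n"
    and \<Omega> C :: "(real^'n) set"
    and xs :: "real^'n"
    and \<gamma> vt \<omega>1 \<omega>2 lam a b :: real
    and \<sigma> \<kappa> :: ereal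
    and x s r y :: "nat \<Rightarrow> real^'n"
    and M P :: "nat \<Rightarrow> real^'n^'n"
    and \<theta> \<eta> :: "nat \<Rightarrow> real"
  assumes \<Omega>_open: "open \<Omega>"
    and F_C1: "\<forall>z\<in>\<Omega>. F differentiable (at z)" "continuous_on \<Omega> (jac F)"
    and C: "convex C" "compact C" "C \<noteq> {}" "C \<subseteq> \<Omega>"
    and xs: "xs \<in> C" "F xs = 0" "invertible (jac F xs)"
    and analytic: "real_analytic_on F \<Omega>"
    and gamma_fin: "bdd_above {(mlnorm (matrix_inv (jac F xs)) n F xs) powr (1 / (real n - 1)) | n. n > 1}"
    and gamma_def: "\<gamma> = Sup {(mlnorm (matrix_inv (jac F xs)) n F xs) powr (1 / (real n - 1)) | n. n > 1}"
    and kappa_def: "\<kappa> = Sup {ereal t | t. 0 \<le> t \<and> (\<gamma> = 0 \<or> t < 1 / \<gamma>) \<and> ball xs t \<subseteq> \<Omega>}"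
    and par: "0 \<le> vt" "vt < 1" "0 \<le> \<omega>2" "\<omega>2 < \<omega>1" "\<omega>1 * vt + \<omega>2 < 1"
    and lam: "0 \<le> lam" "lam < (1 - \<omega>2 - \<omega>1 * vt) / (\<omega>1 * (1 + vt))"
    and a_def: "a = \<omega>1 * (1 + vt) * (1 - 3 * lam) + 4 * (1 - \<omega>1 * vt - \<omega>2)"
    and b_def: "b = 1 - \<omega>1 * ((1 + vt) * lam + vt) - \<omega>2"
    and sigma_def: "\<sigma> = min \<kappa> (if \<gamma> = 0 then \<infinity> else ereal ((a - sqrt (a\<^sup>2 - 8 * b\<^sup>2)) / (4 * \<gamma> * b)))"
    and x0: "x 0 \<in> C" "ereal (dist (x 0) xs) < \<sigma>" "x 0 \<noteq> xs"
    and theta: "\<forall>k. 0 \<le> \<theta> k \<and> \<theta> k \<le> lam\<^sup>2 / 2"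
    and nostop: "\<forall>k. F (x k) \<noteq> 0"
    and Minv: "\<forall>k. invertible (M k)"
    and Newton: "\<forall>k. M k *v s k = - F (x k) + r k \<and> y k = x k + s k"
    and step: "\<forall>k. CondG_out C (y k) (x k) (\<theta> k * (norm (s k))\<^sup>2) (x (Suc k))"
    and M1: "\<forall>k. opnorm (matrix_inv (M k) ** jac F (x k)) \<le> \<omega>1"
    and M2: "\<forall>k. opnorm (matrix_inv (M k) ** jac F (x k) - mat 1) \<le> \<omega>2"
    and Pinv: "\<forall>k. invertible (P k)"
    and resid: "\<forall>k. norm (P k *v r k) \<le> \<eta> k * norm (P k *v F (x k))"
    and eta: "\<forall>k. 0 \<le> \<eta> k * cond (P k ** jac F (x k)) \<and> \<eta> k * cond (P k ** jac F (x k)) \<le> vt"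
  shows "(\<forall>k. x k \<in> C \<and> ereal (dist (x k) xs) < \<sigma>)
     \<and> x \<longlonglongrightarrow> xs
     \<and> (\<forall>k. dist (x (Suc k)) xs < dist (x k) xs)
     \<and> limsup (\<lambda>k. ereal (dist (x (Suc k)) xs / dist (x k) xs))
         \<le> ereal (\<omega>1 * ((1 + vt) * sqrt (2 * real_of_ereal (limsup (\<lambda>k. ereal (\<theta> k)))) + vt) + \<omega>2)
     \<and> (\<forall>k. dist (x (Suc k)) xs
         \<le> \<omega>1 * (1 + vt) * (1 + lam) * \<gamma> / (2 * (1 - \<gamma> * dist (x 0) xs)\<^sup>2 - 1) * (dist (x k) xs)\<^sup>2
           + (\<omega>1 * ((1 + vt) * lam + vt) + \<omega>2) * dist (x k) xs)"
proof -
  have HD: "HDiff F \<Omega>" by (rule analytic_HDiff[OF analytic])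
  have xsO: "xs \<in> \<Omega>" using C(4) xs(1) by blast
  have mem: "(mlnorm (matrix_inv (jac F xs)) n F xs) powr (1 / (real n - 1)) \<le> \<gamma>" if "n > 1" for n
    unfolding gamma_def by (rule cSup_upper[OF _ gamma_fin]) (use that in blast)
  have g0: "\<gamma> \<ge> 0" using mem[of 2] by (meson order_trans powr_ge_zero one_less_numeral_iff semiring_norm(76))
  have mlb: "mlnorm (matrix_inv (jac F xs)) k F xs \<le> \<gamma> ^ (k - 1)" if k: "k \<ge> 2" for k
  proof -
    define m where "m = mlnorm (matrix_inv (jac F xs)) k F xs"
    have m0: "m \<ge> 0" unfolding m_def by (rule mlnorm_nonneg[OF \<Omega>_open HD xsO])
    have mk: "m powr (1 / (real k - 1)) \<le> \<gamma>" using mem[of k] k by (simp add: m_def)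
    show ?thesis
    proof (cases "m = 0")
      case True then show ?thesis using g0 by (simp add: m_def)
    next
      case False
      then have mp: "m > 0" using m0 by simp
      have k1: "real k - 1 > 0" using k by simp
      have rk: "real (k - 1) = real k - 1" using k by (simp add: of_nat_diff)
      have "(m powr (1 / (real k - 1))) powr (real (k - 1)) = m powr ((1 / (real k - 1)) * (real k - 1))"
        by (simp only: powr_powr rk)
      also have "\<dots> = m" using k1 mp by simp
      finally have "m = (m powr (1 / (real k - 1))) powr (real (k - 1))" by simp
      also have "\<dots> = (m powr (1 / (real k - 1))) ^ (k - 1)" by (rule powr_realpow) (use mp in simp)
      also have "\<dots> \<le> \<gamma> ^ (k - 1)" by (rule power_mono[OF mk]) simp
      finally show ?thesis by (simp add: m_def)
    qed
  qed
  define \<rho>0 where "\<rho>0 = dist (x 0) xs"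
  have \<rho>0pos: "\<rho>0 > 0" using x0(3) by (simp add: \<rho>0_def)
  have sk: "ereal \<rho>0 < \<kappa>"
    and sr: "ereal \<rho>0 < (if \<gamma> = 0 then \<infinity> else ereal ((a - sqrt (a\<^sup>2 - 8 * b\<^sup>2)) / (4 * \<gamma> * b)))"
    using x0(2) sigma_def by (auto simp: \<rho>0_def)
  obtain R where R: "0 \<le> R" "\<gamma> = 0 \<or> R < 1 / \<gamma>" "ball xs R \<subseteq> \<Omega>" "\<rho>0 < R"
    using sk[unfolded kappa_def less_Sup_iff] by auto
  have gR: "\<gamma> * R \<le> 1"
  proof (cases "\<gamma> = 0")
    case False
    then have "\<gamma> > 0" using g0 by simp
    then show ?thesis using R(2) False by (simp add: field_simps)
  qed simp
  have w1: "\<omega>1 > 0" using par by linarith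
  have b0: "b > 0"
  proof -
    have p: "\<omega>1 * (1 + vt) > 0" using w1 par by simp
    have "lam * (\<omega>1 * (1 + vt)) < 1 - \<omega>2 - \<omega>1 * vt" using lam(2) p by (simp add: pos_less_divide_eq)
    then show ?thesis unfolding b_def by (simp add: algebra_simps)
  qed
  define Kc where "Kc = \<omega>1 * (1 + vt) * (1 + lam)"
  have aK: "a - 4 * b = Kc" by (simp add: a_def b_def Kc_def algebra_simps)
  have Kc0: "Kc > 0" using w1 par lam by (simp add: Kc_def)
  define u0 where "u0 = \<gamma> * \<rho>0"
  define D0 where "D0 = 2 * (1 - u0)\<^sup>2 - 1"
  have u00: "u0 \<ge> 0" using g0 \<rho>0pos by (simp add: u0_def)
  have u01: "u0 < 1"
  proof (cases "\<gamma> = 0")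
    case False
    then have "\<gamma> > 0" using g0 by simp
    then have "\<gamma> * \<rho>0 < \<gamma> * R" using R(4) by simp
    then show ?thesis using gR by (simp add: u0_def)
  qed (simp add: u0_def)
  have key: "D0 > 0 \<and> Kc * u0 < b * D0"
  proof (cases "\<gamma> = 0")
    case True then show ?thesis using b0 by (simp add: u0_def D0_def)
  next
    case False
    then have gp: "\<gamma> > 0" using g0 by simp
    have "\<rho>0 < (a - sqrt (a\<^sup>2 - 8 * b\<^sup>2)) / (4 * \<gamma> * b)" using sr False by simp
    from mult_strict_left_mono[OF this gp]
    have "\<gamma> * \<rho>0 < \<gamma> * ((a - sqrt (a\<^sup>2 - 8 * b\<^sup>2)) / (4 * \<gamma> * b))" .
    also have "\<dots> = (a - sqrt (a\<^sup>2 - 8 * b\<^sup>2)) / (4 * b)" using gp by simp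
    finally have "u0 < (a - sqrt (a\<^sup>2 - 8 * b\<^sup>2)) / (4 * b)" by (simp add: u0_def)
    from root_alg[OF b0 _ u00 this] aK Kc0 show ?thesis by (simp add: D0_def)
  qed
  have b1: "b \<le> 1"
  proof -
    have "0 \<le> \<omega>1 * ((1 + vt) * lam + vt)" using w1 par lam by simp
    then show ?thesis using par unfolding b_def by linarith
  qed
  define c0 where "c0 = Kc * u0 / D0 + (1 - b)"
  have c01: "c0 < 1"
  proof -
    have "Kc * u0 / D0 < b" using key by (simp add: pos_divide_less_eq)
    then show ?thesis by (simp add: c0_def)
  qed
  have "Kc * u0 / D0 \<ge> 0" using key Kc0 u00 by (intro divide_nonneg_pos mult_nonneg_nonneg) auto
  then have c00: "c0 \<ge> 0" using b1 by (simp add: c0_def)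
  have sq\<theta>: "sqrt (\<theta> k) \<le> lam" for k
  proof -
    have "\<theta> k \<le> lam\<^sup>2 / 2" using theta by blast
    moreover have "0 \<le> lam\<^sup>2" by simp
    ultimately have "\<theta> k \<le> lam\<^sup>2" by linarith
    then have "sqrt (\<theta> k) \<le> sqrt (lam\<^sup>2)" by (rule real_sqrt_le_mono)
    then show ?thesis using lam(1) by simp
  qed
  have step_k: "x (Suc k) \<in> C \<and> dist (x (Suc k)) xs \<le>
      (\<omega>2 + \<omega>1 * vt + sqrt (\<theta> k) * (\<omega>1 * (1 + vt))) * dist (x k) xs
      + (\<omega>1 + \<omega>1 * vt + sqrt (\<theta> k) * (\<omega>1 * (1 + vt))) * (\<gamma> * (dist (x k) xs)\<^sup>2 / D0)"
    if xkC: "x k \<in> C" and dk: "dist (x k) xs \<le> \<rho>0" for k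
  proof -
    define \<rho> where "\<rho> = dist (x k) xs"
    define e where "e = x k - xs"
    have ne: "norm e = \<rho>" by (simp add: e_def \<rho>_def dist_norm)
    have \<rho>0': "\<rho> \<ge> 0" by (simp add: \<rho>_def)
    have uu1: "0 \<le> \<gamma> * \<rho>" using g0 \<rho>0' by simp
    have uu2: "\<gamma> * \<rho> \<le> u0" unfolding u0_def using g0 dk by (simp add: \<rho>_def mult_left_mono)
    have "(1 - u0)\<^sup>2 \<le> (1 - \<gamma> * \<rho>)\<^sup>2" using uu2 u01 by (intro power_mono) auto
    then have Dk: "2 * (1 - \<gamma> * \<rho>)\<^sup>2 - 1 \<ge> D0" by (simp add: D0_def)
    have Dk1: "2 * (1 - \<gamma> * norm (x k - xs))\<^sup>2 > 1" using Dk key by (simp add: D0_def ne[unfolded e_def])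
    have xR: "norm (x k - xs) < R" using dk R(4) by (simp add: dist_norm)
    have GE: "invertible (jac F (x k)) \<and>
      norm (matrix_inv (jac F (x k)) *v F (x k) - (x k - xs)) \<le> \<gamma> * (norm (x k - xs))\<^sup>2 / (2 * (1 - \<gamma> * norm (x k - xs))\<^sup>2 - 1)"
      by (rule gamma_est[OF \<Omega>_open analytic xsO xs(2) xs(3) g0 mlb R(3) gR xR Dk1])
    define N where "N = \<gamma> * \<rho>\<^sup>2 / (2 * (1 - \<gamma> * \<rho>)\<^sup>2 - 1)"
    have gN: "norm (matrix_inv (jac F (x k)) *v F (x k) - e) \<le> N"
      using GE ne by (simp add: N_def e_def)
    have N0: "N \<ge> 0" using Dk key g0 by (simp add: N_def)
    have NN: "N \<le> \<gamma> * \<rho>\<^sup>2 / D0"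
      unfolding N_def using key Dk g0 by (intro divide_left_mono) auto
    have etak: "\<eta> k * cond (P k ** jac F (x k)) \<le> vt" using eta by blast
    have NS: "norm (s k) \<le> \<omega>1 * (1 + vt) * (norm e + N) \<and>
         norm (e + s k) \<le> \<omega>2 * norm e + \<omega>1 * N + \<omega>1 * vt * (norm e + N)"
      by (rule newton_step[OF conjunct1[OF GE] gN Minv[rule_format] conjunct1[OF Newton[rule_format]]
            M1[rule_format] M2[rule_format] Pinv[rule_format] resid[rule_format] etak par(1)])
    have yk: "y k - xs = e + s k" using Newton by (simp add: e_def)
    have cg: "condg_run C (y k) (\<theta> k * (norm (s k))\<^sup>2) (x k) (x (Suc k))"
      using step unfolding CondG_out_def by blast
    have eps0: "\<theta> k * (norm (s k))\<^sup>2 \<ge> 0" using theta by simp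
    have CP: "x (Suc k) \<in> C \<and> gmin C (y k) (x (Suc k)) \<ge> - (\<theta> k * (norm (s k))\<^sup>2)"
      by (rule condg_props[OF cg C(1) eps0 xkC])
    have "norm (x (Suc k) - xs) \<le> norm (y k - xs) + sqrt (\<theta> k * (norm (s k))\<^sup>2)"
      using CP condg_dist[OF _ _ C(2) xs(1) eps0] by blast
    also have "sqrt (\<theta> k * (norm (s k))\<^sup>2) = sqrt (\<theta> k) * norm (s k)"
      by (simp add: real_sqrt_mult)
    finally have d1: "norm (x (Suc k) - xs) \<le> norm (e + s k) + sqrt (\<theta> k) * norm (s k)"
      by (simp add: yk)
    define sq where "sq = sqrt (\<theta> k)"
    have sq0: "sq \<ge> 0" using theta by (simp add: sq_def)
    have "sq * norm (s k) \<le> sq * (\<omega>1 * (1 + vt) * (norm e + N))"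
      using NS sq0 by (intro mult_left_mono) auto
    then have d2: "norm (x (Suc k) - xs) \<le>
        (\<omega>2 + \<omega>1 * vt + sq * (\<omega>1 * (1 + vt))) * \<rho> + (\<omega>1 + \<omega>1 * vt + sq * (\<omega>1 * (1 + vt))) * N"
      using d1 NS ne unfolding sq_def[symmetric] by (simp add: algebra_simps)
    have cN: "0 \<le> \<omega>1 + \<omega>1 * vt + sq * (\<omega>1 * (1 + vt))" using w1 par sq0 by simp
    have "(\<omega>1 + \<omega>1 * vt + sq * (\<omega>1 * (1 + vt))) * N \<le> (\<omega>1 + \<omega>1 * vt + sq * (\<omega>1 * (1 + vt))) * (\<gamma> * \<rho>\<^sup>2 / D0)"
      using NN cN by (rule mult_left_mono)
    with d2 have "norm (x (Suc k) - xs) \<le>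
        (\<omega>2 + \<omega>1 * vt + sq * (\<omega>1 * (1 + vt))) * \<rho> + (\<omega>1 + \<omega>1 * vt + sq * (\<omega>1 * (1 + vt))) * (\<gamma> * \<rho>\<^sup>2 / D0)"
      by linarith
    then show ?thesis using CP by (simp add: sq_def \<rho>_def dist_norm)
  qed
  have lamb: "\<omega>2 + \<omega>1 * vt + lam * (\<omega>1 * (1 + vt)) = \<omega>1 * ((1 + vt) * lam + vt) + \<omega>2"
    by (simp add: algebra_simps)
  have contr: "x (Suc k) \<in> C \<and> dist (x (Suc k)) xs \<le> c0 * dist (x k) xs \<and>
      dist (x (Suc k)) xs \<le> Kc * \<gamma> / D0 * (dist (x k) xs)\<^sup>2 + (\<omega>1 * ((1 + vt) * lam + vt) + \<omega>2) * dist (x k) xs"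
    if xkC: "x k \<in> C" and dk: "dist (x k) xs \<le> \<rho>0" for k
  proof -
    define \<rho> where "\<rho> = dist (x k) xs"
    define sq where "sq = sqrt (\<theta> k)"
    have \<rho>0': "\<rho> \<ge> 0" by (simp add: \<rho>_def)
    have sq0: "sq \<ge> 0" using theta by (simp add: sq_def)
    have sql: "sq \<le> lam" using sq\<theta>[of k] by (simp add: sq_def)
    from step_k[OF xkC dk] have A: "x (Suc k) \<in> C"
      and B: "dist (x (Suc k)) xs \<le> (\<omega>2 + \<omega>1 * vt + sq * (\<omega>1 * (1 + vt))) * \<rho>
      + (\<omega>1 + \<omega>1 * vt + sq * (\<omega>1 * (1 + vt))) * (\<gamma> * \<rho>\<^sup>2 / D0)"
      by (simp_all add: sq_def \<rho>_def)
    have p: "\<omega>1 * (1 + vt) \<ge> 0" using w1 par by simp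
    have c1: "(\<omega>2 + \<omega>1 * vt + sq * (\<omega>1 * (1 + vt))) * \<rho> \<le> (\<omega>1 * ((1 + vt) * lam + vt) + \<omega>2) * \<rho>"
      unfolding lamb[symmetric] using sql p \<rho>0' by (intro mult_right_mono) (auto intro: mult_right_mono)
    have c2: "(\<omega>1 + \<omega>1 * vt + sq * (\<omega>1 * (1 + vt))) * (\<gamma> * \<rho>\<^sup>2 / D0) \<le> Kc * (\<gamma> * \<rho>\<^sup>2 / D0)"
    proof (rule mult_right_mono)
      have "sq * (\<omega>1 * (1 + vt)) \<le> lam * (\<omega>1 * (1 + vt))" using sql p by (rule mult_right_mono)
      then show "\<omega>1 + \<omega>1 * vt + sq * (\<omega>1 * (1 + vt)) \<le> Kc" by (simp add: Kc_def algebra_simps)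
      show "0 \<le> \<gamma> * \<rho>\<^sup>2 / D0" using g0 key by simp
    qed
    have b5: "dist (x (Suc k)) xs \<le> Kc * \<gamma> / D0 * \<rho>\<^sup>2 + (\<omega>1 * ((1 + vt) * lam + vt) + \<omega>2) * \<rho>"
      using B c1 c2 by (simp add: algebra_simps)
    have "\<gamma> * \<rho> \<le> u0" unfolding u0_def using g0 dk by (simp add: \<rho>_def mult_left_mono)
    then have "\<gamma> * \<rho> * \<rho> \<le> u0 * \<rho>" using \<rho>0' by (rule mult_right_mono)
    then have "Kc * (\<gamma> * \<rho> * \<rho>) / D0 \<le> Kc * (u0 * \<rho>) / D0"
      using Kc0 key by (intro divide_right_mono mult_left_mono) auto
    then have X: "Kc * \<gamma> / D0 * \<rho>\<^sup>2 \<le> Kc * u0 / D0 * \<rho>" by (simp add: power2_eq_square mult_ac)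
    have E: "\<omega>1 * ((1 + vt) * lam + vt) + \<omega>2 = 1 - b" by (simp add: b_def)
    have b5': "dist (x (Suc k)) xs \<le> Kc * \<gamma> / D0 * \<rho>\<^sup>2 + (1 - b) * \<rho>" using b5 unfolding E .
    have "c0 * \<rho> = Kc * u0 / D0 * \<rho> + (1 - b) * \<rho>" by (simp add: c0_def algebra_simps)
    then have "dist (x (Suc k)) xs \<le> c0 * \<rho>" using X b5' by linarith
    then show ?thesis using A b5 by (simp add: \<rho>_def)
  qed
  have ind: "x k \<in> C \<and> dist (x k) xs \<le> c0 ^ k * \<rho>0" for k
  proof (induction k)
    case 0 then show ?case using x0(1) by (simp add: \<rho>0_def)
  next
    case (Suc k)
    have "c0 ^ k \<le> 1" using c00 c01 by (simp add: power_le_one)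
    then have "c0 ^ k * \<rho>0 \<le> \<rho>0" using \<rho>0pos by (simp add: mult_le_cancel_right1)
    then have dk: "dist (x k) xs \<le> \<rho>0" using Suc.IH by linarith
    from contr[OF conjunct1[OF Suc.IH] dk]
    have "x (Suc k) \<in> C" "dist (x (Suc k)) xs \<le> c0 * dist (x k) xs" by auto
    moreover have "c0 * dist (x k) xs \<le> c0 * (c0 ^ k * \<rho>0)" using Suc.IH c00 by (simp add: mult_left_mono)
    ultimately show ?case by simp
  qed
  have dle: "dist (x k) xs \<le> \<rho>0" for k
  proof -
    have "c0 ^ k \<le> 1" using c00 c01 by (simp add: power_le_one)
    then have "c0 ^ k * \<rho>0 \<le> \<rho>0" using \<rho>0pos by (simp add: mult_le_cancel_right1)
    then show ?thesis using ind[of k] by linarith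
  qed
  have xkC: "x k \<in> C" for k using ind by blast
  have dpos: "dist (x k) xs > 0" for k
  proof -
    have "x k \<noteq> xs" using nostop xs(2) by metis
    then show ?thesis by simp
  qed
  have conv0: "(\<lambda>k. dist (x k) xs) \<longlonglongrightarrow> 0"
  proof (rule tendsto_sandwich[of "\<lambda>_. 0" _ _ "\<lambda>k. c0 ^ k * \<rho>0"])
    show "\<forall>\<^sub>F k in sequentially. 0 \<le> dist (x k) xs" by simp
    show "\<forall>\<^sub>F k in sequentially. dist (x k) xs \<le> c0 ^ k * \<rho>0" using ind by simp
    show "(\<lambda>_. 0::real) \<longlonglongrightarrow> 0" by simp
    have "(\<lambda>k. c0 ^ k) \<longlonglongrightarrow> 0" by (rule LIMSEQ_power_zero) (use c00 c01 in simp)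
    then show "(\<lambda>k. c0 ^ k * \<rho>0) \<longlonglongrightarrow> 0" by (rule tendsto_mult_left_zero)
  qed
  have ratio: "dist (x (Suc k)) xs / dist (x k) xs \<le> (\<omega>2 + \<omega>1 * vt) + (\<omega>1 * (1 + vt)) * sqrt (\<theta> k) + (Kc * \<gamma> / D0) * dist (x k) xs" for k
  proof -
    define \<rho> where "\<rho> = dist (x k) xs"
    have \<rho>p: "\<rho> > 0" using dpos by (simp add: \<rho>_def)
    define sq where "sq = sqrt (\<theta> k)"
    have sq0: "sq \<ge> 0" using theta by (simp add: sq_def)
    have sql: "sq \<le> lam" using sq\<theta>[of k] by (simp add: sq_def)
    have p: "\<omega>1 * (1 + vt) \<ge> 0" using w1 par by simp
    from step_k[OF xkC dle]
    have B: "dist (x (Suc k)) xs \<le> (\<omega>2 + \<omega>1 * vt + sq * (\<omega>1 * (1 + vt))) * \<rho>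
      + (\<omega>1 + \<omega>1 * vt + sq * (\<omega>1 * (1 + vt))) * (\<gamma> * \<rho>\<^sup>2 / D0)"
      by (simp add: sq_def \<rho>_def)
    have c2: "(\<omega>1 + \<omega>1 * vt + sq * (\<omega>1 * (1 + vt))) * (\<gamma> * \<rho>\<^sup>2 / D0) \<le> Kc * (\<gamma> * \<rho>\<^sup>2 / D0)"
    proof (rule mult_right_mono)
      have "sq * (\<omega>1 * (1 + vt)) \<le> lam * (\<omega>1 * (1 + vt))" using sql p by (rule mult_right_mono)
      then show "\<omega>1 + \<omega>1 * vt + sq * (\<omega>1 * (1 + vt)) \<le> Kc" by (simp add: Kc_def algebra_simps)
      show "0 \<le> \<gamma> * \<rho>\<^sup>2 / D0" using g0 key by simp
    qed
    have "dist (x (Suc k)) xs \<le> ((\<omega>2 + \<omega>1 * vt) + (\<omega>1 * (1 + vt)) * sq + (Kc * \<gamma> / D0) * \<rho>) * \<rho>"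
      using B c2 by (simp add: power2_eq_square algebra_simps)
    then show ?thesis using \<rho>p by (simp add: pos_divide_le_eq sq_def \<rho>_def)
  qed
  have LS: "limsup (\<lambda>k. ereal (dist (x (Suc k)) xs / dist (x k) xs))
      \<le> ereal ((\<omega>2 + \<omega>1 * vt) + (\<omega>1 * (1 + vt)) * sqrt (2 * real_of_ereal (limsup (\<lambda>k. ereal (\<theta> k)))))"
  proof (rule limsup_lemma[OF ratio])
    show "0 \<le> \<omega>1 * (1 + vt)" using w1 par by simp
    show "0 \<le> Kc * \<gamma> / D0" using Kc0 g0 key by simp
    show "(\<lambda>k. dist (x k) xs) \<longlonglongrightarrow> 0" by (rule conv0)
    show "\<And>k. 0 \<le> \<theta> k" using theta by blast
    show "\<And>k. \<theta> k \<le> lam\<^sup>2 / 2" using theta by blast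
  qed
  have LSeq: "(\<omega>2 + \<omega>1 * vt) + (\<omega>1 * (1 + vt)) * sqrt (2 * real_of_ereal (limsup (\<lambda>k. ereal (\<theta> k))))
      = \<omega>1 * ((1 + vt) * sqrt (2 * real_of_ereal (limsup (\<lambda>k. ereal (\<theta> k)))) + vt) + \<omega>2"
    by (simp add: algebra_simps)
  show ?thesis
  proof (intro conjI allI)
    fix k
    show "x k \<in> C" by (rule xkC)
    have "ereal (dist (x k) xs) \<le> ereal \<rho>0" using dle by simp
    then show "ereal (dist (x k) xs) < \<sigma>" using x0(2) unfolding \<rho>0_def by (rule le_less_trans)
  next
    show "x \<longlonglongrightarrow> xs" using conv0 tendsto_dist_iff by blast
  next
    fix k
    have "dist (x (Suc k)) xs \<le> c0 * dist (x k) xs" using contr[OF xkC dle] by blast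
    also have "\<dots> < dist (x k) xs" using c01 dpos[of k] by simp
    finally show "dist (x (Suc k)) xs < dist (x k) xs" .
  next
    show "limsup (\<lambda>k. ereal (dist (x (Suc k)) xs / dist (x k) xs))
         \<le> ereal (\<omega>1 * ((1 + vt) * sqrt (2 * real_of_ereal (limsup (\<lambda>k. ereal (\<theta> k)))) + vt) + \<omega>2)"
      using LS unfolding LSeq .
  next
    fix k
    have "dist (x (Suc k)) xs \<le> Kc * \<gamma> / D0 * (dist (x k) xs)\<^sup>2 + (\<omega>1 * ((1 + vt) * lam + vt) + \<omega>2) * dist (x k) xs"
      using contr[OF xkC dle] by blast
    then show "dist (x (Suc k)) xs
         \<le> \<omega>1 * (1 + vt) * (1 + lam) * \<gamma> / (2 * (1 - \<gamma> * dist (x 0) xs)\<^sup>2 - 1) * (dist (x k) xs)\<^sup>2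
           + (\<omega>1 * ((1 + vt) * lam + vt) + \<omega>2) * dist (x k) xs"
      unfolding Kc_def D0_def u0_def \<rho>0_def .
  qed
qed


end
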